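(* Let $\beta>\beta_c$, $0\le\delta<\beta$ with $\delta\le\bar\delta(\beta)$, and let $\check\delta(\beta)$ be the unique solution in $(\beta/2,\beta)$ of $\mathcal L(\delta-\beta/2)=-\log\Gamma_\beta$. If $\delta_c(\beta)<\delta<\check\delta(\beta)$, then $\mathsf W_{\beta,\delta}$ is concave on $[0,1]$; if $\check\delta(\beta)<\delta<\beta$, then $\mathsf W_{\beta,\delta}$ is convex on $[0,1]$.
   Context: $\Gamma_\beta=\frac{e^{-\beta}+e^{-3\beta/2}}{1-e^{-\beta/2}}$, $\beta_c$ the unique positive solution of $\Gamma_\beta=1$. $c_\beta=\frac{1+e^{-\beta/2}}{1-e^{-\beta/2}}$, $\mathcal L(h)=\log\sum_{k\in\mathbb Z}e^{hk}e^{-\beta|k|/2}/c_\beta$ for $|h|<\beta/2$. $\mathcal G(h)=\int_0^1\mathcal L(h(x-\frac12))dx$, $\tilde h(q)$ the unique $h\in[0,\beta)$ with $\mathcal G'(h)=q$; $\mathcal H_\delta(s)=\int_0^1\mathcal L(sx+\delta-\frac\beta2)dx$ for $s\in(-\delta,\beta-\delta)$, $s_\delta(q)$ the unique solution of $\mathcal H_\delta'(s)=q$; $\delta_0(q)=\frac\beta2-\frac{\tilde h(q)}2$; $\psi(q,\delta)=\mathcal G(\tilde h(q))-q\tilde h(q)$ if $0\le\delta\le\delta_0(q)$, $\mathcal H_\delta(s_\delta(q))-qs_\delta(q)$ if $\delta_0(q)<\delta<\beta$; $T_\delta(a)=a\log\Gamma_\beta+a\psi(1/a^2,\delta)$. $x_\beta$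 is the unique solution in $(0,\beta/2)$ of $\mathcal L(x)=-\log\Gamma_\beta$ and $\bar\delta(\beta)=\beta\wedge\inf\{\delta\in(0,\beta):\mathcal H'_\delta(\frac\beta2-\delta-x_\beta)>0\}$; under the hypotheses $T_\delta$ has a unique maximizer $\bar a_{\beta,\delta}$ on $(0,\infty)$. $\delta_c(\beta)=\log(\cosh\beta-\sqrt{\cosh^2\beta-e^\beta})$. Define $\mathsf W_{\beta,\delta}(t)=\int_0^t\mathcal L'\big(s_\delta(\bar a_{\beta,\delta}^{-2})(1-x)+\delta-\frac\beta2\big)dx$ for $t\in[0,1]$. *)

theory Defs
  imports "HOL-Analysis.Analysis"
begin

definition Gam :: "real \<Rightarrow> real" where
  "Gam b = (exp (-b) + exp (-3*b/2)) / (1 - exp (-b/2))"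

definition beta_c :: real where
  "beta_c = (THE b. b > 0 \<and> Gam b = 1)"

definition cb :: "real \<Rightarrow> real" where
  "cb b = (1 + exp (-b/2)) / (1 - exp (-b/2))"

text \<open>L(h) = log sum over integers k of exp(h k) exp(-b |k|/2) / c_b (meaningful for |h| < b/2)\<close>
definition Lf :: "real \<Rightarrow> real \<Rightarrow> real" where
  "Lf b h = ln ((\<Sum>\<^sub>\<infinity>k\<in>(UNIV::int set). exp (h * of_int k) * exp (- b * \<bar>of_int k\<bar> / 2)) / cb b)"

definition Gf :: "real \<Rightarrow> real \<Rightarrow> real" where
  "Gf b h = integral {0..1} (\<lambda>x. Lf b (h * (x - 1/2)))"

definition htilde :: "real \<Rightarrow> real \<Rightarrow> real" where
  "htilde b q = (THE h. 0 \<le> h \<and> h < b \<and> deriv (Gf b) h = q)"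

definition Hf :: "real \<Rightarrow> real \<Rightarrow> real \<Rightarrow> real" where
  "Hf b d s = integral {0..1} (\<lambda>x. Lf b (s * x + d - b/2))"

definition sdelta :: "real \<Rightarrow> real \<Rightarrow> real \<Rightarrow> real" where
  "sdelta b d q = (THE s. -d < s \<and> s < b - d \<and> deriv (Hf b d) s = q)"

definition delta0 :: "real \<Rightarrow> real \<Rightarrow> real" where
  "delta0 b q = b/2 - htilde b q / 2"

definition psi :: "real \<Rightarrow> real \<Rightarrow> real \<Rightarrow> real" where
  "psi b q d = (if 0 \<le> d \<and> d \<le> delta0 b q then Gf b (htilde b q) - q * htilde b q
               else Hf b d (sdelta b d q) - q * sdelta b d q)"

definition Tf :: "real \<Rightarrow> real \<Rightarrow> real \<Rightarrow> real" where
  "Tf b d a = a * ln (Gam b) + a * psi b (1 / a^2) d"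

definition xbeta :: "real \<Rightarrow> real" where
  "xbeta b = (THE x. 0 < x \<and> x < b/2 \<and> Lf b x = - ln (Gam b))"

text \<open>bar delta = min(b, inf S), with inf of the empty set read as +infinity\<close>
definition deltabar :: "real \<Rightarrow> real" where
  "deltabar b = (let S = {d. 0 < d \<and> d < b \<and> deriv (Hf b d) (b/2 - d - xbeta b) > 0}
                 in if S = {} then b else min b (Inf S))"

definition abar :: "real \<Rightarrow> real \<Rightarrow> real" where
  "abar b d = (THE a. 0 < a \<and> (\<forall>a'. 0 < a' \<longrightarrow> Tf b d a' \<le> Tf b d a))"

definition delta_c :: "real \<Rightarrow> real" where
  "delta_c b = ln (cosh b - sqrt ((cosh b)^2 - exp b))"

definition deltacheck :: "real \<Rightarrow> real" where
  "deltacheck b = (THE d. b/2 < d \<and> d < b \<and> Lf b (d - b/2) = - ln (Gam b))"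

definition Wf :: "real \<Rightarrow> real \<Rightarrow> real \<Rightarrow> real" where
  "Wf b d t = integral {0..t}
     (\<lambda>x. deriv (Lf b) (sdelta b d ((abar b d) powr (-2)) * (1 - x) + d - b/2))"

end

theory Submission
  imports Defs
begin

definition L0 :: "real \<Rightarrow> real \<Rightarrow> real" where
  "L0 b h = ln (1 - exp (-b)) - ln (1 - exp (h - b/2)) - ln (1 - exp (-h - b/2)) - ln (cb b)"

lemma geo_part:
  fixes r :: real assumes "0 < r" "r < 1"
  shows "((\<lambda>n::nat. r^n) has_sum (1/(1-r))) UNIV"
  by (rule sums_nonneg_imp_has_sum) (use assms geometric_sums[of r] in auto)

lemma Lf_sum:
  fixes b h :: real
  assumes b: "b > 0" and h: "\<bar>h\<bar> < b/2"
  shows "((\<lambda>k::int. exp (h * of_int k) * exp (- b * \<bar>of_int k\<bar> / 2)) has_sum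
      (1/(1 - exp (h - b/2)) + exp (-h - b/2)/(1 - exp (-h - b/2)))) UNIV"
proof -
  define f where "f = (\<lambda>k::int. exp (h * of_int k) * exp (- b * \<bar>of_int k\<bar> / 2))"
  define r1 where "r1 = exp (h - b/2)"
  define r2 where "r2 = exp (-h - b/2)"
  have r1: "0 < r1" "r1 < 1" using h unfolding r1_def by auto
  have r2: "0 < r2" "r2 < 1" using h unfolding r2_def by auto
  have A: "(f has_sum (1/(1-r1))) (range int)"
  proof -
    have "((f \<circ> int) has_sum (1/(1-r1))) UNIV"
    proof -
      have "(f \<circ> int) = (\<lambda>n. r1^n)"
        by (auto simp: f_def r1_def fun_eq_iff exp_of_nat_mult[symmetric] exp_add[symmetric] algebra_simps)
      then show ?thesis using geo_part[OF r1] by simp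
    qed
    then show ?thesis by (subst has_sum_reindex) auto
  qed
  have B: "(f has_sum (r2/(1-r2))) (range (\<lambda>n::nat. - int n - 1))"
  proof -
    have "((f \<circ> (\<lambda>n::nat. - int n - 1)) has_sum (r2 * (1/(1-r2)))) UNIV"
    proof -
      have e: "(f \<circ> (\<lambda>n::nat. - int n - 1)) = (\<lambda>n. r2 * r2^n)"
      proof
        fix n :: nat
        have "(f \<circ> (\<lambda>n::nat. - int n - 1)) n = exp ((-h - b/2) * (real n + 1))"
          by (simp add: f_def exp_add[symmetric] algebra_simps)
        also have "\<dots> = r2 * r2^n"
          by (simp add: r2_def exp_of_nat_mult[symmetric] exp_add[symmetric] algebra_simps)
        finally show "(f \<circ> (\<lambda>n::nat. - int n - 1)) n = r2 * r2^n" .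
      qed
      show ?thesis unfolding e by (rule has_sum_cmult_right) (rule geo_part[OF r2])
    qed
    then show ?thesis by (subst has_sum_reindex) (auto simp: inj_on_def)
  qed
  have U: "range int \<union> range (\<lambda>n::nat. - int n - 1) = UNIV"
  proof -
    { fix k :: int
      have "k \<in> range int \<union> range (\<lambda>n::nat. - int n - 1)"
      proof (cases "k \<ge> 0")
        case True then show ?thesis by (auto intro!: image_eqI[of _ _ "nat k"])
      next
        case False then show ?thesis by (auto intro!: image_eqI[of _ _ "nat (-k-1)"])
      qed }
    then show ?thesis by auto
  qed
  have "(f has_sum (1/(1-r1) + r2/(1-r2))) (range int \<union> range (\<lambda>n::nat. - int n - 1))"
    by (rule has_sum_Un_disjoint[OF A B]) auto
  then show ?thesis unfolding U f_def r1_def r2_def .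
qed

lemma cb_pos: "b > 0 \<Longrightarrow> cb b > 0"
  unfolding cb_def by (auto intro!: divide_pos_pos add_pos_pos)

lemma Lf_eq:
  assumes b: "b > 0" and h: "\<bar>h\<bar> < b/2"
  shows "Lf b h = L0 b h"
proof -
  define r1 where "r1 = exp (h - b/2)"
  define r2 where "r2 = exp (-h - b/2)"
  have r1: "0 < r1" "r1 < 1" using h unfolding r1_def by auto
  have r2: "0 < r2" "r2 < 1" using h unfolding r2_def by auto
  have r12: "r1 * r2 = exp (-b)" unfolding r1_def r2_def by (simp add: exp_add[symmetric])
  have S: "1/(1-r1) + r2/(1-r2) = (1 - exp (-b)) / ((1-r1)*(1-r2))"
    using r1 r2 by (simp add: field_simps r12[symmetric])
  have "Lf b h = ln ((1 - exp (-b)) / ((1-r1)*(1-r2)) / cb b)"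
    unfolding Lf_def using infsumI[OF Lf_sum[OF b h]] S r1_def r2_def by simp
  also have "\<dots> = L0 b h"
    unfolding L0_def r1_def[symmetric] r2_def[symmetric] using r1 r2 b cb_pos[OF b]
    by (simp add: ln_div ln_mult)
  finally show ?thesis .
qed


definition P0 :: "real \<Rightarrow> real \<Rightarrow> real" where
  "P0 b h = exp (h - b/2) / (1 - exp (h - b/2)) - exp (-h - b/2) / (1 - exp (-h - b/2))"

definition Q0 :: "real \<Rightarrow> real \<Rightarrow> real" where
  "Q0 b h = exp (h - b/2) / (1 - exp (h - b/2))^2 + exp (-h - b/2) / (1 - exp (-h - b/2))^2"

lemma exps_lt1: fixes b h :: real assumes "\<bar>h\<bar> < b/2" shows "exp (h - b/2) < 1" "exp (-h - b/2) < 1"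
  using assms by auto

lemma L0_deriv: fixes b h :: real assumes "\<bar>h\<bar> < b/2" shows "(L0 b has_real_derivative P0 b h) (at h)"
proof -
  note e = exps_lt1[OF assms]
  show ?thesis unfolding L0_def P0_def
    by (rule derivative_eq_intros refl | use e in \<open>simp add: field_simps\<close>)+
qed

lemma P0_deriv: fixes b h :: real assumes "\<bar>h\<bar> < b/2" shows "(P0 b has_real_derivative Q0 b h) (at h)"
proof -
  note e = exps_lt1[OF assms]
  show ?thesis unfolding Q0_def P0_def
    by (rule derivative_eq_intros refl | use e in \<open>simp add: field_simps power2_eq_square\<close>)+
qed


lemma Q0_ge: fixes b h :: real assumes "\<bar>h\<bar> < b/2" shows "Q0 b h \<ge> exp (-b)"
proof -
  define y where "y = h - b/2"
  have y: "y > -b" "y < 0" using assms unfolding y_def by auto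
  have e: "exp y < 1" "0 < exp y" using y by auto
  have "exp y / (1 - exp y)^2 \<ge> exp y"
  proof -
    have "(1 - exp y)^2 \<le> 1" using e by (simp add: power2_eq_square mult_le_one)
    moreover have "(1 - exp y)^2 > 0" using e by simp
    ultimately show ?thesis using e by (simp add: divide_simps)
  qed
  moreover have "exp y \<ge> exp (-b)" using y by simp
  moreover have "exp (-h - b/2) / (1 - exp (-h - b/2))^2 \<ge> 0" by simp
  ultimately show ?thesis unfolding Q0_def y_def by linarith
qed

lemma P0_mono_strong:
  fixes b u v :: real
  assumes "\<bar>u\<bar> < b/2" "\<bar>v\<bar> < b/2" "u \<le> v"
  shows "P0 b v - P0 b u \<ge> exp (-b) * (v - u)"
proof -
  have "(\<lambda>x. P0 b x - exp (-b) * x) u \<le> (\<lambda>x. P0 b x - exp (-b) * x) v"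
  proof (rule DERIV_nonneg_imp_nondecreasing[OF assms(3)])
    fix x assume x: "u \<le> x" "x \<le> v"
    then have hx: "\<bar>x\<bar> < b/2" using assms by auto
    show "\<exists>y. ((\<lambda>x. P0 b x - exp (-b) * x) has_real_derivative y) (at x) \<and> y \<ge> 0"
      by (rule exI[of _ "Q0 b x - exp (-b)"])
         (use Q0_ge[OF hx] P0_deriv[OF hx] in \<open>auto intro!: derivative_eq_intros\<close>)
  qed
  then show ?thesis by (simp add: algebra_simps)
qed

lemma P0_mono2:
  fixes b u v :: real
  assumes "\<bar>u\<bar> < b/2" "\<bar>v\<bar> < b/2"
  shows "(P0 b v - P0 b u) * (v - u) \<ge> exp (-b) * (v - u)^2"
proof (cases "u \<le> v")
  case True
  have "P0 b v - P0 b u \<ge> exp (-b) * (v - u)" by (rule P0_mono_strong[OF assms True])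
  then have "(P0 b v - P0 b u) * (v - u) \<ge> exp (-b) * (v - u) * (v - u)"
    using True by (intro mult_right_mono) auto
  then show ?thesis by (simp add: power2_eq_square algebra_simps)
next
  case False
  have "P0 b u - P0 b v \<ge> exp (-b) * (u - v)" by (rule P0_mono_strong[OF assms(2,1)]) (use False in auto)
  then have "(P0 b u - P0 b v) * (u - v) \<ge> exp (-b) * (u - v) * (u - v)"
    using False by (intro mult_right_mono) auto
  then show ?thesis by (simp add: power2_eq_square algebra_simps)
qed

lemma P0_mono: fixes b u v :: real
  assumes "\<bar>u\<bar> < b/2" "\<bar>v\<bar> < b/2" "u \<le> v" shows "P0 b u \<le> P0 b v"
  using P0_mono_strong[OF assms] assms(3) by (smt (verit) exp_gt_zero mult_nonneg_nonneg)

lemma P0_zero[simp]: "P0 b 0 = 0" unfolding P0_def by simp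

lemma P0_odd: "P0 b (-h) = - P0 b h" unfolding P0_def by simp

lemma L0_even: "L0 b (-h) = L0 b h" unfolding L0_def by simp

lemma L0_zero: fixes b :: real assumes "b > 0" shows "L0 b 0 = 0"
proof -
  define t where "t = exp (-b/2)"
  have t: "0 < t" "t < 1" using assms unfolding t_def by auto
  have e: "exp (-b) = t*t" unfolding t_def by (simp add: exp_add[symmetric])
  have 1: "ln (1 - t*t) = ln (1-t) + ln (1+t)"
  proof -
    have "1 - t*t = (1-t)*(1+t)" by (simp add: algebra_simps)
    then show ?thesis using t by (simp add: ln_mult)
  qed
  have 2: "ln ((1+t)/(1-t)) = ln (1+t) - ln (1-t)" using t by (simp add: ln_div)
  have "L0 b 0 = ln (1 - t*t) - ln (1 - t) - ln (1 - t) - ln ((1 + t) / (1 - t))"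
    unfolding L0_def cb_def t_def e[unfolded t_def] by simp
  then show ?thesis using 1 2 by simp
qed

lemma P0_lower: fixes b h :: real assumes "0 \<le> h" "h < b/2" shows "P0 b h \<ge> exp (-b) * h"
  using P0_mono_strong[of 0 b h] assms by simp

lemma P0_pos: fixes b h :: real assumes "0 < h" "h < b/2" shows "P0 b h > 0"
  using P0_lower[of h b] assms by (smt (verit) exp_gt_zero mult_pos_pos)

lemma P0_neg: fixes b h :: real assumes "h < 0" "-b/2 < h" shows "P0 b h < 0"
  using P0_pos[of "-h" b] assms P0_odd[of b "-h"] by simp

lemma L0_strict_mono: fixes b u v :: real assumes "0 \<le> u" "u < v" "v < b/2"
  shows "L0 b u < L0 b v"
proof -
  have "continuous_on {u..v} (L0 b)"
  proof (rule DERIV_atLeastAtMost_imp_continuous_on)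
    fix x assume "u \<le> x" "x \<le> v"
    then have "\<bar>x\<bar> < b/2" using assms by auto
    then show "\<exists>y. (L0 b has_real_derivative y) (at x)" using L0_deriv by blast
  qed
  then show ?thesis
    by (rule DERIV_pos_imp_increasing_open[OF assms(2), rotated])
       (use assms in \<open>auto intro!: exI L0_deriv P0_pos\<close>)
qed

lemma L0_mono_abs: fixes b u v :: real assumes "\<bar>u\<bar> \<le> \<bar>v\<bar>" "\<bar>v\<bar> < b/2"
  shows "L0 b u \<le> L0 b v"
proof -
  have "L0 b \<bar>u\<bar> \<le> L0 b \<bar>v\<bar>"
    using L0_strict_mono[of "\<bar>u\<bar>" "\<bar>v\<bar>" b] assms by (cases "\<bar>u\<bar> = \<bar>v\<bar>") auto
  moreover have "L0 b \<bar>u\<bar> = L0 b u" "L0 b \<bar>v\<bar> = L0 b v"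
    by (auto simp: abs_if L0_even)
  ultimately show ?thesis by simp
qed

lemma L0_nonneg: fixes b h :: real assumes "\<bar>h\<bar> < b/2" shows "L0 b h \<ge> 0"
  using L0_mono_abs[of 0 h b] L0_zero[of b] assms by simp

lemma L0_convex: fixes b :: real shows "convex_on {-b/2<..<b/2} (L0 b)"
  by (rule convex_on_realI[where f'="P0 b"]) (auto intro!: L0_deriv P0_mono)

lemma L0_cont: fixes b h :: real assumes "\<bar>h\<bar> < b/2" shows "isCont (L0 b) h"
  using L0_deriv[OF assms] DERIV_isCont by blast
lemma P0_cont: fixes b h :: real assumes "\<bar>h\<bar> < b/2" shows "isCont (P0 b) h"
  using P0_deriv[OF assms] DERIV_isCont by blast
lemma Q0_cont: fixes b h :: real assumes "\<bar>h\<bar> < b/2" shows "isCont (Q0 b) h"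
proof -
  note e = exps_lt1[OF assms]
  show ?thesis unfolding Q0_def using e by (intro continuous_intros) auto
qed

lemma Lf_deriv: fixes b h :: real assumes "b > 0" "\<bar>h\<bar> < b/2"
  shows "(Lf b has_real_derivative P0 b h) (at h)"
  by (rule has_field_derivative_transform_within_open[OF L0_deriv[OF assms(2)], of "{-b/2<..<b/2}"])
     (use assms Lf_eq in auto)

lemma deriv_Lf: fixes b h :: real assumes "b > 0" "\<bar>h\<bar> < b/2"
  shows "deriv (Lf b) h = P0 b h"
  using DERIV_imp_deriv[OF Lf_deriv[OF assms]] .

lemma L0_unbounded: fixes b K :: real assumes "b > 0"
  shows "\<exists>h. 0 < h \<and> h < b/2 \<and> L0 b h > K"
proof -
  define C where "C = ln (1 - exp (-b)) - ln (cb b)"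
  define A where "A = 1 - exp (-b/2)"
  define B where "B = exp (C - K - 1)"
  define eps where "eps = min (A/2) B"
  have A0: "A > 0" unfolding A_def using assms by simp
  have B0: "B > 0" unfolding B_def by simp
  have eps0: "0 < eps" unfolding eps_def using A0 B0 by simp
  have eps1: "eps < A" unfolding eps_def using A0 by linarith
  have eps2: "eps \<le> B" unfolding eps_def by simp
  define h where "h = b/2 + ln (1 - eps)"
  have le: "exp (-b/2) < 1 - eps" using eps1 unfolding A_def by simp
  have "0 < 1 - eps" using le by (smt (verit) exp_gt_zero)
  have "ln (exp (-b/2)) < ln (1 - eps)"
    using le \<open>0 < 1 - eps\<close> by (subst ln_less_cancel_iff) auto
  then have h0: "h > 0" unfolding h_def by simp
  have "ln (1 - eps) < 0" using eps0 \<open>0 < 1 - eps\<close> by (intro ln_less_zero) auto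
  then have h1: "h < b/2" unfolding h_def by simp
  have ex: "exp (h - b/2) = 1 - eps" unfolding h_def using \<open>0 < 1 - eps\<close> by simp
  have "exp (-h - b/2) < 1" using h0 assms by simp
  moreover have "exp (-h - b/2) > 0" by simp
  ultimately have "ln (1 - exp (-h - b/2)) \<le> 0" by (simp add: ln_le_zero_iff)
  moreover have "ln eps \<le> C - K - 1"
  proof -
    have "ln eps \<le> ln B" using eps0 eps2 by simp
    then show ?thesis unfolding B_def by simp
  qed
  moreover have "L0 b h = C - ln eps - ln (1 - exp (-h - b/2))"
    unfolding L0_def C_def ex by simp
  ultimately have "L0 b h > K" by linarith
  then show ?thesis using h0 h1 by blast
qed


lemma P0_contOn: fixes b :: real shows "continuous_on {-b/2<..<b/2} (P0 b)"
  by (rule continuous_at_imp_continuous_on) (auto intro!: P0_cont)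
lemma L0_contOn: fixes b :: real shows "continuous_on {-b/2<..<b/2} (L0 b)"
  by (rule continuous_at_imp_continuous_on) (auto intro!: L0_cont)
lemma Q0_contOn: fixes b :: real shows "continuous_on {-b/2<..<b/2} (Q0 b)"
  by (rule continuous_at_imp_continuous_on) (auto intro!: Q0_cont)

lemma leib:
  fixes f f' :: "real \<Rightarrow> real \<Rightarrow> real"
  assumes s0: "s0 \<in> {lo<..<hi}"
    and d: "\<And>s x. s \<in> {lo<..<hi} \<Longrightarrow> x \<in> {0..1} \<Longrightarrow> ((\<lambda>s. f s x) has_real_derivative f' s x) (at s)"
    and c1: "\<And>s. s \<in> {lo<..<hi} \<Longrightarrow> continuous_on {0..1} (f s)"
    and c2: "continuous_on ({lo<..<hi} \<times> {0..1}) (\<lambda>(s,x). f' s x)"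
  shows "((\<lambda>s. integral {0..1} (f s)) has_real_derivative integral {0..1} (f' s0)) (at s0)"
proof -
  have "((\<lambda>s. integral (cbox 0 1) (f s)) has_real_derivative integral (cbox 0 1) (f' s0)) (at s0 within {lo<..<hi})"
  proof (rule leibniz_rule_field_derivative)
    fix x t assume xt: "x \<in> {lo<..<hi}" "t \<in> cbox (0::real) 1"
    have "t \<in> {0..1}" using xt(2) by (simp add: cbox_interval)
    from d[OF xt(1) this] show "((\<lambda>x. f x t) has_real_derivative f' x t) (at x within {lo<..<hi})"
      by (rule has_field_derivative_at_within)
  next
    fix x assume "x \<in> {lo<..<hi}"
    from c1[OF this] show "f x integrable_on cbox 0 1"
      unfolding cbox_interval by (rule integrable_continuous_interval)
  next
    show "continuous_on ({lo<..<hi} \<times> cbox 0 1) (\<lambda>(x, t). f' x t)" using c2 by (simp add: cbox_interval)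
  qed (use s0 in auto)
  moreover have "at s0 within {lo<..<hi} = at s0" using s0 by (intro at_within_open) auto
  ultimately show ?thesis by (simp add: cbox_interval)
qed

lemma abs_in: fixes t b :: real shows "\<bar>t\<bar> < b/2 \<Longrightarrow> t \<in> {-b/2<..<b/2}"
  by (cases "t \<ge> 0") auto

definition admI :: "real \<Rightarrow> real \<Rightarrow> real \<Rightarrow> real \<Rightarrow> real \<Rightarrow> bool" where
  "admI b e c lo hi \<longleftrightarrow> (\<forall>s\<in>{lo<..<hi}. \<forall>x\<in>{0..1}. \<bar>s*(x+e)+c\<bar> < b/2)"

definition Kf :: "real \<Rightarrow> real \<Rightarrow> real \<Rightarrow> real \<Rightarrow> real" where
  "Kf b e c s = integral {0..1} (\<lambda>x. L0 b (s*(x+e)+c))"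
definition K1 :: "real \<Rightarrow> real \<Rightarrow> real \<Rightarrow> real \<Rightarrow> real" where
  "K1 b e c s = integral {0..1} (\<lambda>x. (x+e) * P0 b (s*(x+e)+c))"
definition K2 :: "real \<Rightarrow> real \<Rightarrow> real \<Rightarrow> real \<Rightarrow> real" where
  "K2 b e c s = integral {0..1} (\<lambda>x. (x+e)^2 * Q0 b (s*(x+e)+c))"

context
  fixes b e c lo hi :: real
  assumes adm: "admI b e c lo hi"
begin

lemma adm': "s \<in> {lo<..<hi} \<Longrightarrow> x \<in> {0..1} \<Longrightarrow> \<bar>s*(x+e)+c\<bar> < b/2"
  using adm unfolding admI_def by blast

lemma prof_cont2:
  assumes g: "continuous_on {-b/2<..<b/2} g"
  shows "continuous_on ({lo<..<hi} \<times> {0..1}) (\<lambda>(s,x). g (s*(x+e)+c))"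
proof -
  have "continuous_on ({lo<..<hi} \<times> {0..1}) (\<lambda>z. g ((\<lambda>(s,x). s*(x+e)+c) z))"
  proof (rule continuous_on_compose2[OF g])
    show "continuous_on ({lo<..<hi} \<times> {0..1}) (\<lambda>(s,x). s*(x+e)+c)"
      unfolding case_prod_beta by (intro continuous_intros)
    show "(\<lambda>(s,x). s*(x+e)+c) ` ({lo<..<hi} \<times> {0..1}) \<subseteq> {-b/2<..<b/2}"
    proof
      fix y assume "y \<in> (\<lambda>(s,x). s*(x+e)+c) ` ({lo<..<hi} \<times> {0..1})"
      then obtain z where z: "z \<in> {lo<..<hi} \<times> {0..1}" "y = (\<lambda>(s,x). s*(x+e)+c) z" by blast
      obtain s x where zz: "z = (s, x)" by (cases z)
      have x: "s \<in> {lo<..<hi}" "x \<in> {0..1}" "y = s*(x+e)+c" using z zz by auto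
      show "y \<in> {-b/2<..<b/2}" using abs_in[OF adm'[OF x(1,2)]] x(3) by simp
    qed
  qed
  then show ?thesis by (simp add: case_prod_beta)
qed

lemma prof_cont1:
  assumes g: "continuous_on {-b/2<..<b/2} g" and s: "s \<in> {lo<..<hi}"
  shows "continuous_on {0..1} (\<lambda>x. g (s*(x+e)+c))"
proof (rule continuous_on_compose2[OF g])
  show "continuous_on {0..1} (\<lambda>x. s*(x+e)+c)" by (intro continuous_intros)
  show "(\<lambda>x. s*(x+e)+c) ` {0..1} \<subseteq> {-b/2<..<b/2}"
  proof
    fix y assume "y \<in> (\<lambda>x. s*(x+e)+c) ` {0..1}"
    then obtain x where x: "x \<in> {0..1}" "y = s*(x+e)+c" by blast
    show "y \<in> {-b/2<..<b/2}" using abs_in[OF adm'[OF s x(1)]] x(2) by simp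
  qed
qed

lemma K_deriv: assumes "s \<in> {lo<..<hi}"
  shows "(Kf b e c has_real_derivative K1 b e c s) (at s)"
proof -
  have "((\<lambda>s. integral {0..1} (\<lambda>x. L0 b (s*(x+e)+c))) has_real_derivative
         integral {0..1} (\<lambda>x. (x+e) * P0 b (s*(x+e)+c))) (at s)"
  proof (rule leib[OF assms])
    fix s x :: real assume sx: "s \<in> {lo<..<hi}" "x \<in> {0..1}"
    show "((\<lambda>s. L0 b (s * (x + e) + c)) has_real_derivative (x+e) * P0 b (s*(x+e)+c)) (at s)"
    proof -
      have i: "((\<lambda>s. s*(x+e)+c) has_real_derivative (x+e)) (at s)"
        by (auto intro!: derivative_eq_intros)
      from DERIV_chain2[OF L0_deriv[OF adm'[OF sx]] i] show ?thesis by (simp add: mult.commute)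
    qed
  next
    fix s assume "s \<in> {lo<..<hi}"
    then show "continuous_on {0..1} (\<lambda>x. L0 b (s*(x+e)+c))" by (rule prof_cont1[OF L0_contOn])
  next
    have "continuous_on ({lo<..<hi} \<times> {0..1}) (\<lambda>(s,x). P0 b (s*(x+e)+c))"
      by (rule prof_cont2[OF P0_contOn])
    then show "continuous_on ({lo<..<hi} \<times> {0..1}) (\<lambda>(s,x). (x+e) * P0 b (s*(x+e)+c))"
      by (auto intro!: continuous_intros simp: case_prod_beta)
  qed
  then show ?thesis unfolding Kf_def K1_def .
qed

lemma K1_deriv: assumes "s \<in> {lo<..<hi}"
  shows "(K1 b e c has_real_derivative K2 b e c s) (at s)"
proof -
  have "((\<lambda>s. integral {0..1} (\<lambda>x. (x+e) * P0 b (s*(x+e)+c))) has_real_derivative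
         integral {0..1} (\<lambda>x. (x+e)^2 * Q0 b (s*(x+e)+c))) (at s)"
  proof (rule leib[OF assms])
    fix s x :: real assume sx: "s \<in> {lo<..<hi}" "x \<in> {0..1}"
    have "((\<lambda>s. P0 b (s * (x + e) + c)) has_real_derivative Q0 b (s*(x+e)+c) * (x+e)) (at s)"
    proof -
      have i: "((\<lambda>s. s*(x+e)+c) has_real_derivative (x+e)) (at s)"
        by (auto intro!: derivative_eq_intros)
      from DERIV_chain2[OF P0_deriv[OF adm'[OF sx]] i] show ?thesis by simp
    qed
    then show "((\<lambda>s. (x+e) * P0 b (s * (x + e) + c)) has_real_derivative (x+e)^2 * Q0 b (s*(x+e)+c)) (at s)"
      by (auto intro!: derivative_eq_intros simp: power2_eq_square algebra_simps)
  next
    fix s assume "s \<in> {lo<..<hi}"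
    then have "continuous_on {0..1} (\<lambda>x. P0 b (s*(x+e)+c))" by (rule prof_cont1[OF P0_contOn])
    then show "continuous_on {0..1} (\<lambda>x. (x+e) * P0 b (s*(x+e)+c))" by (auto intro!: continuous_intros)
  next
    have "continuous_on ({lo<..<hi} \<times> {0..1}) (\<lambda>(s,x). Q0 b (s*(x+e)+c))"
      by (rule prof_cont2[OF Q0_contOn])
    then show "continuous_on ({lo<..<hi} \<times> {0..1}) (\<lambda>(s,x). (x+e)^2 * Q0 b (s*(x+e)+c))"
      by (auto intro!: continuous_intros simp: case_prod_beta)
  qed
  then show ?thesis unfolding K2_def K1_def .
qed

lemma K1_cont: assumes "s \<in> {lo<..<hi}" shows "isCont (K1 b e c) s"
  using K1_deriv[OF assms] DERIV_isCont by blast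

lemma K_cont: assumes "s \<in> {lo<..<hi}" shows "isCont (Kf b e c) s"
  using K_deriv[OF assms] DERIV_isCont by blast

end

lemma sq_int: fixes e :: real shows "integral {0..1} (\<lambda>x. (x+e)^2) = ((1+e)^3 - e^3)/3"
proof -
  have "((\<lambda>x. (x+e)^2) has_integral ((1+e)^3/3 - (0+e)^3/3)) {0..1}"
  proof (rule fundamental_theorem_of_calculus)
    fix x :: real assume "x \<in> {0..1}"
    show "((\<lambda>x. (x+e)^3/3) has_vector_derivative (x+e)^2) (at x within {0..1})"
      unfolding has_real_derivative_iff_has_vector_derivative[symmetric]
      by (auto intro!: derivative_eq_intros simp: power2_eq_square)
  qed simp
  then show ?thesis by (simp add: integral_unique diff_divide_distrib)
qed

lemma sq_int_pos: fixes e :: real shows "((1+e)^3 - e^3)/3 > 0"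
proof -
  have "(1+e)^3 - e^3 = 3*(e + 1/2)^2 + 1/4" by (simp add: power3_eq_cube power2_eq_square algebra_simps)
  moreover have "3*(e + 1/2)^2 \<ge> 0" by simp
  ultimately have "(1+e)^3 - e^3 > 0" by linarith
  then show ?thesis by simp
qed

context
  fixes b e c lo hi :: real
  assumes adm: "admI b e c lo hi"
begin

lemma K2_pos: assumes s: "s \<in> {lo<..<hi}" shows "K2 b e c s > 0"
proof -
  have c1: "continuous_on {0..1} (\<lambda>x. Q0 b (s*(x+e)+c))" by (rule prof_cont1[OF adm Q0_contOn s])
  have "integral {0..1} (\<lambda>x. exp (-b) * (x+e)^2) \<le> K2 b e c s"
    unfolding K2_def
  proof (rule integral_le)
    show "(\<lambda>x. exp (- b) * (x + e)\<^sup>2) integrable_on {0..1}"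
      by (intro integrable_continuous_interval continuous_intros)
    show "(\<lambda>x. (x + e)\<^sup>2 * Q0 b (s * (x + e) + c)) integrable_on {0..1}"
      by (intro integrable_continuous_interval continuous_intros c1)
    fix x :: real assume x: "x \<in> {0..1}"
    have "Q0 b (s * (x + e) + c) \<ge> exp (-b)" by (rule Q0_ge[OF adm'[OF adm s x]])
    then show "exp (- b) * (x + e)\<^sup>2 \<le> (x + e)\<^sup>2 * Q0 b (s * (x + e) + c)"
      using mult_right_mono[OF \<open>exp (-b) \<le> _\<close>, of "(x+e)^2"] by (simp add: mult.commute)
  qed
  moreover have "integral {0..1} (\<lambda>x. exp (-b) * (x+e)^2) = exp (-b) * (((1+e)^3 - e^3)/3)"
    using sq_int[of e] by simp
  moreover have "exp (-b) * (((1+e)^3 - e^3)/3) > 0" using sq_int_pos[of e] by simp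
  ultimately show ?thesis by linarith
qed

lemma K1_strict_mono: assumes "s1 \<in> {lo<..<hi}" "s2 \<in> {lo<..<hi}" "s1 < s2"
  shows "K1 b e c s1 < K1 b e c s2"
proof (rule DERIV_pos_imp_increasing[OF assms(3)])
  fix x assume "s1 \<le> x" "x \<le> s2"
  then have x: "x \<in> {lo<..<hi}" using assms by auto
  show "\<exists>y. (K1 b e c has_real_derivative y) (at x) \<and> 0 < y"
    using K1_deriv[OF adm x] K2_pos[OF x] by blast
qed

lemma K1_mono: assumes "s1 \<in> {lo<..<hi}" "s2 \<in> {lo<..<hi}" "s1 \<le> s2"
  shows "K1 b e c s1 \<le> K1 b e c s2"
  using K1_strict_mono[OF assms(1,2)] assms(3) by (cases "s1 = s2") auto

lemma K_ident: assumes s: "s \<in> {lo<..<hi}"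
  shows "s * K1 b e c s = (1+e) * L0 b (s*(1+e)+c) - e * L0 b (s*e+c) - Kf b e c s"
proof -
  define F where "F = (\<lambda>x. (x+e) * L0 b (s*(x+e)+c))"
  define F' where "F' = (\<lambda>x. L0 b (s*(x+e)+c) + s * ((x+e) * P0 b (s*(x+e)+c)))"
  have "(F' has_integral (F 1 - F 0)) {0..1}"
  proof (rule fundamental_theorem_of_calculus)
    fix x :: real assume x: "x \<in> {0..1}"
    have i: "((\<lambda>x. s*(x+e)+c) has_real_derivative s) (at x)"
      by (auto intro!: derivative_eq_intros)
    have l: "((\<lambda>x. L0 b (s*(x+e)+c)) has_real_derivative P0 b (s*(x+e)+c) * s) (at x)"
      using DERIV_chain2[OF L0_deriv[OF adm'[OF adm s x]] i] .
    have "(F has_real_derivative F' x) (at x)"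
      unfolding F_def F'_def
      by (rule derivative_eq_intros refl l | simp add: algebra_simps)+
    then show "(F has_vector_derivative F' x) (at x within {0..1})"
      using has_field_derivative_at_within has_real_derivative_iff_has_vector_derivative by blast
  qed simp
  then have "integral {0..1} F' = F 1 - F 0" by (rule integral_unique)
  moreover have "integral {0..1} F' = Kf b e c s + s * K1 b e c s"
  proof -
    have cL: "continuous_on {0..1} (\<lambda>x. L0 b (s*(x+e)+c))" by (rule prof_cont1[OF adm L0_contOn s])
    have cP: "continuous_on {0..1} (\<lambda>x. P0 b (s*(x+e)+c))" by (rule prof_cont1[OF adm P0_contOn s])
    have i1: "(\<lambda>x. L0 b (s*(x+e)+c)) integrable_on {0..1}" by (rule integrable_continuous_interval[OF cL])
    have i2: "(\<lambda>x. s * ((x+e) * P0 b (s*(x+e)+c))) integrable_on {0..1}"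
      by (intro integrable_continuous_interval continuous_intros cP)
    have "integral {0..1} F' = integral {0..1} (\<lambda>x. L0 b (s*(x+e)+c)) + integral {0..1} (\<lambda>x. s * ((x+e) * P0 b (s*(x+e)+c)))"
      unfolding F'_def by (rule integral_add[OF i1 i2])
    then show ?thesis unfolding Kf_def K1_def by simp
  qed
  ultimately show ?thesis unfolding F_def by (simp add: algebra_simps)
qed

end

lemma cvx_lt: fixes x u v A :: real
  assumes "0 \<le> x" "x \<le> 1" "A < u" "A < v" shows "A < (1-x)*u + x* v"
proof -
  have "(1-x)*(u-A) \<ge> 0" "x*(v-A) \<ge> 0" using assms by auto
  moreover have "(1-x)*(u-A) > 0 \<or> x*(v-A) > 0" using assms by (cases "x = 0") auto
  ultimately have "(1-x)*(u-A) + x*(v-A) > 0" by linarith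
  then show ?thesis by (simp add: algebra_simps)
qed

lemma cvx_gt: fixes x u v A :: real
  assumes "0 \<le> x" "x \<le> 1" "u < A" "v < A" shows "(1-x)*u + x* v < A"
  using cvx_lt[of x "-A" "-u" "-v"] assms by (simp add: algebra_simps)

lemma cvx_abs: fixes x u v B :: real
  assumes "0 \<le> x" "x \<le> 1" "\<bar>u\<bar> < B" "\<bar>v\<bar> < B" shows "\<bar>(1-x)*u + x* v\<bar> < B"
proof -
  have "-B < (1-x)*u + x* v" by (rule cvx_lt) (use assms in auto)
  moreover have "(1-x)*u + x* v < B" by (rule cvx_gt) (use assms in auto)
  ultimately show ?thesis by (intro abs_less_iff[THEN iffD2] conjI) linarith+
qed

lemma admH: fixes b d :: real assumes "0 < d" "d < b"
  shows "admI b 0 (d - b/2) (-d) (b-d)"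
  unfolding admI_def
proof (intro ballI)
  fix s x :: real assume s: "s \<in> {-d<..<b-d}" and x: "x \<in> {0..1}"
  have "\<bar>(1-x)*(d-b/2) + x*(s+d-b/2)\<bar> < b/2"
  proof (rule cvx_abs)
    show "\<bar>d - b/2\<bar> < b/2" "\<bar>s + d - b/2\<bar> < b/2" unfolding abs_less_iff using s assms by auto
  qed (use x in auto)
  moreover have "(1-x)*(d-b/2) + x*(s+d-b/2) = s*(x+0)+(d-b/2)" by (simp add: field_simps)
  ultimately show "\<bar>s*(x+0)+(d-b/2)\<bar> < b/2" by simp
qed

lemma admG: fixes b :: real assumes "0 < b"
  shows "admI b (-1/2) 0 (-b) b"
  unfolding admI_def
proof (intro ballI)
  fix s x :: real assume s: "s \<in> {-b<..<b}" and x: "x \<in> {0..1}"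
  have "\<bar>(1-x)*(-s/2) + x*(s/2)\<bar> < b/2"
    by (rule cvx_abs) (use s x assms in auto)
  moreover have "(1-x)*(-s/2) + x*(s/2) = s*(x + -1/2) + 0" by (simp add: field_simps)
  ultimately show "\<bar>s*(x + -1/2)+0\<bar> < b/2" by simp
qed

lemma Hf_eq: fixes b d s :: real assumes "0 < d" "d < b" "s \<in> {-d<..<b-d}"
  shows "Hf b d s = Kf b 0 (d - b/2) s"
  unfolding Hf_def Kf_def
proof (rule integral_cong)
  fix x :: real assume x: "x \<in> {0..1}"
  have a: "\<bar>s*(x+0)+(d-b/2)\<bar> < b/2" using admH[OF assms(1,2)] assms(3) x unfolding admI_def by blast
  have eq: "s * x + d - b / 2 = s*(x+0)+(d-b/2)" by simp
  show "Lf b (s * x + d - b / 2) = L0 b (s * (x + 0) + (d - b / 2))"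
    unfolding eq by (rule Lf_eq) (use assms a in auto)
qed

lemma Gf_eq: fixes b h :: real assumes "0 < b" "h \<in> {-b<..<b}"
  shows "Gf b h = Kf b (-1/2) 0 h"
  unfolding Gf_def Kf_def
proof (rule integral_cong)
  fix x :: real assume x: "x \<in> {0..1}"
  have a: "\<bar>h*(x + -1/2)+0\<bar> < b/2" using admG[OF assms(1)] assms(2) x unfolding admI_def by blast
  have eq: "h * (x - 1/2) = h*(x + -1/2)+0" by simp
  show "Lf b (h * (x - 1/2)) = L0 b (h * (x + -1/2) + 0)"
    unfolding eq by (rule Lf_eq) (use assms a in auto)
qed

lemma Hf_deriv: fixes b d s :: real assumes "0 < d" "d < b" "s \<in> {-d<..<b-d}"
  shows "deriv (Hf b d) s = K1 b 0 (d - b/2) s"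
proof -
  have "(Hf b d has_real_derivative K1 b 0 (d - b/2) s) (at s)"
    by (rule has_field_derivative_transform_within_open[OF K_deriv[OF admH[OF assms(1,2)] assms(3)],
          of "{-d<..<b-d}"]) (use assms Hf_eq in auto)
  then show ?thesis by (rule DERIV_imp_deriv)
qed

lemma Gf_deriv: fixes b h :: real assumes "0 < b" "h \<in> {-b<..<b}"
  shows "deriv (Gf b) h = K1 b (-1/2) 0 h"
proof -
  have "(Gf b has_real_derivative K1 b (-1/2) 0 h) (at h)"
    by (rule has_field_derivative_transform_within_open[OF K_deriv[OF admG[OF assms(1)] assms(2)],
          of "{-b<..<b}"]) (use assms Gf_eq in auto)
  then show ?thesis by (rule DERIV_imp_deriv)
qed

lemma K1_root_unique:
  assumes adm: "admI b e c lo hi" and "s \<in> {lo<..<hi}" "t \<in> {lo<..<hi}" "K1 b e c s = K1 b e c t"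
  shows "s = t"
  using K1_strict_mono[OF adm assms(2,3)] K1_strict_mono[OF adm assms(3,2)] assms(4)
  by (cases s t rule: linorder_cases) auto

lemma K1_root_exists:
  assumes adm: "admI b e c lo hi" and s1: "s1 \<in> {lo<..<hi}" and s2: "s2 \<in> {lo<..<hi}"
    and "K1 b e c s1 \<le> q" "q \<le> K1 b e c s2"
  shows "\<exists>s. s1 \<le> s \<and> s \<le> s2 \<and> K1 b e c s = q"
proof -
  have le: "s1 \<le> s2"
  proof (rule ccontr)
    assume "\<not> s1 \<le> s2"
    then have "K1 b e c s2 < K1 b e c s1" using K1_strict_mono[OF adm s2 s1] by auto
    then show False using assms by linarith
  qed
  have "continuous_on {s1..s2} (K1 b e c)"
    using s1 s2 by (intro continuous_at_imp_continuous_on ballI K1_cont[OF adm]) auto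
  then show ?thesis using IVT'[of "K1 b e c" s1 q s2] assms le by auto
qed

lemma int_lin: fixes \<alpha> \<beta> :: real shows "integral {0..1} (\<lambda>x. \<alpha> + \<beta> * x) = \<alpha> + \<beta>/2"
proof -
  have "((\<lambda>x. \<alpha> + \<beta> * x) has_integral ((\<alpha>*1 + \<beta>*1^2/2) - (\<alpha>*0 + \<beta>*0^2/2))) {0..1}"
  proof (rule fundamental_theorem_of_calculus)
    fix x :: real assume "x \<in> {0..1}"
    show "((\<lambda>x. \<alpha>*x + \<beta>*x^2/2) has_vector_derivative \<alpha> + \<beta> * x) (at x within {0..1})"
      unfolding has_real_derivative_iff_has_vector_derivative[symmetric]
      by (auto intro!: derivative_eq_intros simp: power2_eq_square)
  qed simp
  then show ?thesis by (simp add: integral_unique)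
qed

lemma KH_upper: fixes b d s :: real assumes "0 < d" "d < b" "s \<in> {-d<..<b-d}"
  shows "Kf b 0 (d-b/2) s \<le> (L0 b (d-b/2) + L0 b (s + (d-b/2)))/2"
proof -
  define c where "c = d - b/2"
  have cA: "c \<in> {-b/2<..<b/2}" "s + c \<in> {-b/2<..<b/2}" using assms unfolding c_def by auto
  have adm: "admI b 0 c (-d) (b-d)" using admH[OF assms(1,2)] unfolding c_def .
  have "Kf b 0 c s \<le> integral {0..1} (\<lambda>x. L0 b c + (L0 b (s+c) - L0 b c) * x)"
    unfolding Kf_def
  proof (rule integral_le)
    show "(\<lambda>x. L0 b (s * (x + 0) + c)) integrable_on {0..1}"
      by (rule integrable_continuous_interval[OF prof_cont1[OF adm L0_contOn assms(3)]])
    show "(\<lambda>x. L0 b c + (L0 b (s + c) - L0 b c) * x) integrable_on {0..1}"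
      by (intro integrable_continuous_interval continuous_intros)
    fix x :: real assume x: "x \<in> {0..1}"
    have "L0 b ((1 - x) *\<^sub>R c + x *\<^sub>R (s+c)) \<le> (1 - x) * L0 b c + x * L0 b (s+c)"
      by (rule convex_onD[OF L0_convex]) (use x cA in auto)
    moreover have "(1 - x) *\<^sub>R c + x *\<^sub>R (s+c) = s * (x + 0) + c" by (simp add: algebra_simps)
    ultimately show "L0 b (s * (x + 0) + c) \<le> L0 b c + (L0 b (s + c) - L0 b c) * x"
      by (simp add: algebra_simps)
  qed
  also have "\<dots> = (L0 b c + L0 b (s+c))/2" unfolding int_lin by (simp add: field_simps)
  finally show ?thesis unfolding c_def by (simp add: add.commute)
qed


lemma H1_large: fixes b d q :: real assumes d: "0 < d" "d < b"
  shows "\<exists>s \<in> {-d<..<b-d}. K1 b 0 (d-b/2) s \<ge> q"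
proof -
  define c where "c = d - b/2"
  have b: "b > 0" using d by simp
  have cA: "\<bar>c\<bar> < b/2" unfolding c_def abs_less_iff using d by auto
  obtain h where h: "0 < h" "h < b/2" "L0 b h > L0 b c + 2*b*\<bar>q\<bar>"
    using L0_unbounded[OF b] by blast
  have hc: "h > \<bar>c\<bar>"
  proof (rule ccontr)
    assume "\<not> h > \<bar>c\<bar>"
    then have "L0 b h \<le> L0 b c" using L0_mono_abs[of h c b] cA h by auto
    moreover have "2*b*\<bar>q\<bar> \<ge> 0" using b by simp
    ultimately show False using h(3) by linarith
  qed
  define s where "s = h - c"
  have s0: "s > 0" unfolding s_def using hc by simp
  have sI: "s \<in> {-d<..<b-d}" unfolding s_def c_def using h hc d by auto
  have sb: "s < b" using sI d by auto
  have adm: "admI b 0 c (-d) (b-d)" using admH[OF d] unfolding c_def .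
  have idH: "s * K1 b 0 c s = L0 b (s+c) - Kf b 0 c s"
    using K_ident[OF adm sI] by simp
  have upH: "Kf b 0 c s \<le> (L0 b c + L0 b (s + c))/2"
    using KH_upper[OF d sI] unfolding c_def .
  have sc: "s + c = h" unfolding s_def by simp
  have A: "s * K1 b 0 c s \<ge> (L0 b h - L0 b c)/2" unfolding idH sc using upH[unfolded sc] by (simp add: field_simps)
  have B: "(L0 b h - L0 b c)/2 > b*\<bar>q\<bar>" using h(3) by (simp add: field_simps)
  have "s * K1 b 0 c s > b * \<bar>q\<bar>" using A B by linarith
  moreover have "b * \<bar>q\<bar> \<ge> s * \<bar>q\<bar>" using sb by (simp add: mult_right_mono)
  ultimately have "s * K1 b 0 c s > s * \<bar>q\<bar>" by linarith
  then have "K1 b 0 c s > \<bar>q\<bar>" using s0 by (simp add: mult_less_cancel_left)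
  then show ?thesis using sI unfolding c_def by (intro bexI[of _ s]) auto
qed

lemma L0_scale: fixes b z t :: real assumes "\<bar>z\<bar> < b/2" "0 \<le> t" "t \<le> 1" "b > 0"
  shows "L0 b (t * z) \<le> t * L0 b z"
proof -
  have "L0 b ((1 - t) *\<^sub>R 0 + t *\<^sub>R z) \<le> (1 - t) * L0 b 0 + t * L0 b z"
    by (rule convex_onD[OF L0_convex]) (use assms in \<open>auto simp: abs_less_iff\<close>)
  then show ?thesis using L0_zero[OF assms(4)] by simp
qed

lemma KG_upper: fixes b h :: real assumes b: "b > 0" and h: "0 < h" "h < b"
  shows "Kf b (-1/2) 0 h \<le> (7/12) * L0 b (h/2)"
proof -
  have adm: "admI b (-1/2) 0 (-b) b" by (rule admG[OF b])
  have hI: "h \<in> {-b<..<b}" using h by auto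
  have Lh: "L0 b (h/2) \<ge> 0" by (rule L0_nonneg) (use h in auto)
  have "Kf b (-1/2) 0 h \<le> integral {0..1} (\<lambda>x. L0 b (h/2) * ((x + -1/2)^2 * 4) + L0 b (h/2) / 4)"
    unfolding Kf_def
  proof (rule integral_le)
    show "(\<lambda>x. L0 b (h * (x + -1/2) + 0)) integrable_on {0..1}"
      by (rule integrable_continuous_interval[OF prof_cont1[OF adm L0_contOn hI]])
    show "(\<lambda>x. L0 b (h/2) * ((x + -1/2)^2 * 4) + L0 b (h/2) / 4) integrable_on {0..1}"
      by (intro integrable_continuous_interval continuous_intros)
    fix x :: real assume x: "x \<in> {0..1}"
    define y where "y = x + -1/2"
    have y: "\<bar>y\<bar> \<le> 1/2" unfolding y_def abs_le_iff using x by auto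
    define t where "t = 2 * \<bar>y\<bar>"
    have t: "0 \<le> t" "t \<le> 1" unfolding t_def using y by auto
    have "L0 b (h * y) = L0 b \<bar>h * y\<bar>"
      using L0_even[of b "h*y"] by (cases "h * y \<ge> 0") auto
    also have "L0 b \<bar>h * y\<bar> = L0 b (t * (h/2))"
    proof -
      have hy: "\<bar>h * y\<bar> = t * (h/2)" unfolding t_def using h by (simp add: abs_mult)
      show ?thesis by (rule arg_cong[OF hy])
    qed
    also have "\<dots> \<le> t * L0 b (h/2)" by (rule L0_scale) (use h t b in auto)
    also have "\<dots> \<le> (y^2 * 4 + 1/4) * L0 b (h/2)"
    proof (rule mult_right_mono[OF _ Lh])
      have "(2*\<bar>y\<bar> - 1/2)^2 \<ge> 0" by simp
      then have "4 * \<bar>y\<bar>^2 - 2 * \<bar>y\<bar> + 1/4 \<ge> 0" by (simp add: power2_eq_square algebra_simps)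
      then show "t \<le> y^2 * 4 + 1/4" unfolding t_def by simp
    qed
    finally show "L0 b (h * (x + -1/2) + 0) \<le> L0 b (h/2) * ((x + -1/2)^2 * 4) + L0 b (h/2) / 4"
      unfolding y_def by (simp add: algebra_simps)
  qed
  also have "\<dots> = L0 b (h/2) * (integral {0..1} (\<lambda>x. (x + -1/2)^2) * 4) + L0 b (h/2) / 4"
  proof -
    have i: "(\<lambda>x. L0 b (h/2) * ((x + -1/2)^2 * 4)) integrable_on {0..1}"
      by (intro integrable_continuous_interval continuous_intros)
    have i2: "(\<lambda>x::real. L0 b (h/2) / 4) integrable_on {0..1}"
      by (intro integrable_continuous_interval continuous_intros)
    have "integral {0..1} (\<lambda>x. L0 b (h/2) * ((x + -1/2)^2 * 4)) = L0 b (h/2) * (integral {0..1} (\<lambda>x. (x + -1/2)^2) * 4)"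
    proof -
      have "integral {0..1} (\<lambda>x. (L0 b (h/2) * 4) * (x + -1/2)^2) = (L0 b (h/2) * 4) * integral {0..1} (\<lambda>x. (x + -1/2)^2)"
        by simp
      then show ?thesis by (simp add: algebra_simps)
    qed
    moreover have "integral {0..1} (\<lambda>x. L0 b (h/2) * ((x + -1/2)^2 * 4) + L0 b (h/2) / 4) =
       integral {0..1} (\<lambda>x. L0 b (h/2) * ((x + -1/2)^2 * 4)) + integral {0..1} (\<lambda>x::real. L0 b (h/2) / 4)"
      by (rule integral_add[OF i i2])
    moreover have "integral {0..1} (\<lambda>x::real. L0 b (h/2) / 4) = L0 b (h/2) / 4" by simp
    ultimately show ?thesis by simp
  qed
  also have "integral {0..1} (\<lambda>x::real. (x + -1/2)^2) = 1/12"
  proof -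
    have "((1 + -1/2)^3 - (-1/2)^3)/3 = (1/12::real)" by (simp add: power3_eq_cube)
    then show ?thesis using sq_int[of "-1/2"] by simp
  qed
  finally show ?thesis by simp
qed

lemma G1_large: fixes b q :: real assumes b: "b > 0"
  shows "\<exists>h \<in> {-b<..<b}. K1 b (-1/2) 0 h \<ge> q"
proof -
  have adm: "admI b (-1/2) 0 (-b) b" by (rule admG[OF b])
  obtain z where z: "0 < z" "z < b/2" "L0 b z > (12/5)*b*\<bar>q\<bar>"
    using L0_unbounded[OF b] by blast
  define h where "h = 2*z"
  have h: "0 < h" "h < b" unfolding h_def using z by auto
  have hI: "h \<in> {-b<..<b}" using h by auto
  have idG: "h * K1 b (-1/2) 0 h = L0 b (h/2) - Kf b (-1/2) 0 h"
  proof -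
    have "h * K1 b (-1/2) 0 h = (1 + -1/2) * L0 b (h*(1 + -1/2)+0) - (-1/2) * L0 b (h*(-1/2)+0) - Kf b (-1/2) 0 h"
      by (rule K_ident[OF adm hI])
    also have "L0 b (h*(-1/2)+0) = L0 b (h/2)" using L0_even[of b "h/2"] by simp
    also have "L0 b (h*(1 + -1/2)+0) = L0 b (h/2)" by simp
    finally show ?thesis by simp
  qed
  have upG: "Kf b (-1/2) 0 h \<le> (7/12) * L0 b (h/2)" by (rule KG_upper[OF b h])
  have hz: "h/2 = z" unfolding h_def by simp
  have "h * K1 b (-1/2) 0 h \<ge> (5/12) * L0 b z" using idG upG unfolding hz by linarith
  moreover have "(5/12) * L0 b z > b * \<bar>q\<bar>" using z(3) by linarith
  moreover have "b * \<bar>q\<bar> \<ge> h * \<bar>q\<bar>" using h by (simp add: mult_right_mono)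
  ultimately have "h * K1 b (-1/2) 0 h > h * \<bar>q\<bar>" by linarith
  then have "K1 b (-1/2) 0 h > \<bar>q\<bar>" using h by (simp add: mult_less_cancel_left)
  then show ?thesis using hI by (intro bexI[of _ h]) auto
qed

lemma K1G_zero: "K1 b (-1/2) 0 0 = 0"
  unfolding K1_def by simp

lemma htilde_char: fixes b q :: real assumes b: "b > 0" and q: "q \<ge> 0"
  shows "0 \<le> htilde b q \<and> htilde b q < b \<and> K1 b (-1/2) 0 (htilde b q) = q"
proof -
  have adm: "admI b (-1/2) 0 (-b) b" by (rule admG[OF b])
  obtain h2 where h2: "h2 \<in> {-b<..<b}" "K1 b (-1/2) 0 h2 \<ge> q" using G1_large[OF b] by blast
  have z: "(0::real) \<in> {-b<..<b}" using b by auto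
  obtain h where h: "0 \<le> h" "h \<le> h2" "K1 b (-1/2) 0 h = q"
    using K1_root_exists[OF adm z h2(1)] K1G_zero q h2(2) by force
  have hb: "h < b" using h h2 by auto
  have P: "0 \<le> h \<and> h < b \<and> deriv (Gf b) h = q"
    using h hb Gf_deriv[OF b, of h] by auto
  have "htilde b q = h"
    unfolding htilde_def
  proof (rule the_equality)
    show "0 \<le> h \<and> h < b \<and> deriv (Gf b) h = q" by (rule P)
    fix h' assume h': "0 \<le> h' \<and> h' < b \<and> deriv (Gf b) h' = q"
    then have "K1 b (-1/2) 0 h' = q" using Gf_deriv[OF b, of h'] by auto
    then show "h' = h" using K1_root_unique[OF adm, of h' h] h' h hb by auto
  qed
  then show ?thesis using h hb by auto
qed

lemma sdelta_char: fixes b d q s :: real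
  assumes d: "0 < d" "d < b" and s: "s \<in> {-d<..<b-d}" and q: "K1 b 0 (d-b/2) s = q"
  shows "sdelta b d q = s"
  unfolding sdelta_def
proof (rule the_equality)
  show "- d < s \<and> s < b - d \<and> deriv (Hf b d) s = q" using s q Hf_deriv[OF d s] by auto
  fix s' assume s': "- d < s' \<and> s' < b - d \<and> deriv (Hf b d) s' = q"
  then have s'I: "s' \<in> {-d<..<b-d}" by auto
  then have "K1 b 0 (d-b/2) s' = q" using s' Hf_deriv[OF d s'I] by auto
  then show "s' = s" using K1_root_unique[OF admH[OF d] s'I s] q by auto
qed

lemma sdelta_ex: fixes b d q s1 :: real
  assumes d: "0 < d" "d < b" and s1: "s1 \<in> {-d<..<b-d}" and q: "K1 b 0 (d-b/2) s1 \<le> q"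
  shows "sdelta b d q \<in> {-d<..<b-d} \<and> K1 b 0 (d-b/2) (sdelta b d q) = q \<and> s1 \<le> sdelta b d q"
proof -
  obtain s2 where s2: "s2 \<in> {-d<..<b-d}" "K1 b 0 (d-b/2) s2 \<ge> q" using H1_large[OF d] by blast
  obtain s where s: "s1 \<le> s" "s \<le> s2" "K1 b 0 (d-b/2) s = q"
    using K1_root_exists[OF admH[OF d] s1 s2(1) q s2(2)] by blast
  have sI: "s \<in> {-d<..<b-d}" using s s1 s2 by auto
  show ?thesis using sdelta_char[OF d sI s(3)] sI s by auto
qed


definition gt :: "real \<Rightarrow> real" where "gt t = (t^2 + t^3) / (1 - t)"

lemma Gam_gt: "Gam b = gt (exp (-b/2))"
proof -
  have "exp (-b) = exp (-b/2)^2" by (simp add: power2_eq_square exp_add[symmetric])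
  moreover have "exp (-3*b/2) = exp (-b/2)^3" by (simp add: power3_eq_cube exp_add[symmetric])
  ultimately show ?thesis unfolding Gam_def gt_def by simp
qed

lemma gt_mono: fixes t1 t2 :: real assumes "0 < t1" "t1 < t2" "t2 < 1" shows "gt t1 < gt t2"
proof -
  have "t1^2 < t2^2" "t1^3 < t2^3" using assms by (auto intro!: power_strict_mono)
  then have "t1^2 + t1^3 \<le> t2^2 + t2^3" by simp
  moreover have "0 < t1^2 + t1^3" using assms by (intro add_pos_pos) auto
  ultimately show ?thesis unfolding gt_def by (intro frac_less2) (use assms in auto)
qed

lemma Gam_mono: fixes b1 b2 :: real assumes "0 < b1" "b1 < b2" shows "Gam b2 < Gam b1"
  unfolding Gam_gt using assms by (intro gt_mono) auto

lemma Gam_pos: fixes b :: real assumes "0 < b" shows "Gam b > 0"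
  unfolding Gam_gt gt_def using assms by (intro divide_pos_pos add_pos_pos) auto

lemma gt_cont: "continuous_on {1/2..3/4} gt"
  unfolding gt_def by (intro continuous_intros) auto

lemma beta_c_ex: "\<exists>b. 0 < b \<and> Gam b = 1"
proof -
  have "gt (1/2) \<le> 1" "1 \<le> gt (3/4)" unfolding gt_def by (simp_all add: power2_eq_square power3_eq_cube)
  then obtain t where t: "1/2 \<le> t" "t \<le> 3/4" "gt t = 1"
    using IVT'[of gt "1/2" 1 "3/4"] gt_cont by auto
  define b where "b = -2 * ln t"
  have "ln t < 0" using t by (intro ln_less_zero) auto
  then have b0: "b > 0" unfolding b_def by simp
  have "exp (-b/2) = t" unfolding b_def using t by simp
  then have "Gam b = 1" unfolding Gam_gt using t by simp
  then show ?thesis using b0 by blast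
qed

lemma beta_c_prop: "0 < beta_c \<and> Gam beta_c = 1"
proof -
  obtain b where b: "0 < b" "Gam b = 1" using beta_c_ex by blast
  have "beta_c = b" unfolding beta_c_def
  proof (rule the_equality)
    show "0 < b \<and> Gam b = 1" using b by simp
    fix b' assume b': "0 < b' \<and> Gam b' = 1"
    show "b' = b"
      using Gam_mono[of b b'] Gam_mono[of b' b] b b' by (cases b b' rule: linorder_cases) auto
  qed
  then show ?thesis using b by simp
qed

lemma Gam_lt1: fixes b :: real assumes "b > beta_c" shows "b > 0" "Gam b < 1" "0 < Gam b"
  using beta_c_prop Gam_mono[of beta_c b] assms Gam_pos[of b] by auto

lemma lnGam_neg: fixes b :: real assumes "b > beta_c" shows "ln (Gam b) < 0"
  using Gam_lt1[OF assms] by (intro ln_less_zero) auto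

lemma xbeta_prop: fixes b :: real assumes "b > beta_c"
  shows "0 < xbeta b \<and> xbeta b < b/2 \<and> L0 b (xbeta b) = - ln (Gam b)"
proof -
  have b: "b > 0" using Gam_lt1[OF assms] by simp
  define K where "K = - ln (Gam b)"
  have K: "K > 0" unfolding K_def using lnGam_neg[OF assms] by simp
  obtain h where h: "0 < h" "h < b/2" "L0 b h > K" using L0_unbounded[OF b] by blast
  have "continuous_on {0..h} (L0 b)"
    by (rule continuous_on_subset[OF L0_contOn]) (use h in auto)
  then obtain x where x: "0 \<le> x" "x \<le> h" "L0 b x = K"
    using IVT'[of "L0 b" 0 K h] L0_zero[OF b] K h by auto
  have x0: "x > 0" using x L0_zero[OF b] K by (cases "x = 0") auto
  have xb: "x < b/2" using x h by auto
  have uniq: "y = x" if y: "0 < y" "y < b/2" "L0 b y = K" for y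
    using L0_strict_mono[of x y b] L0_strict_mono[of y x b] x0 xb y x
    by (cases x y rule: linorder_cases) auto
  have "xbeta b = x" unfolding xbeta_def
  proof (rule the_equality)
    show "0 < x \<and> x < b/2 \<and> Lf b x = - ln (Gam b)" using x0 xb x Lf_eq[OF b, of x] unfolding K_def by auto
    fix y assume y: "0 < y \<and> y < b/2 \<and> Lf b y = - ln (Gam b)"
    then have "L0 b y = K" using Lf_eq[OF b, of y] unfolding K_def by auto
    then show "y = x" using uniq y by auto
  qed
  then show ?thesis using x0 xb x unfolding K_def by auto
qed

lemma deltacheck_eq: fixes b :: real assumes "b > beta_c" shows "deltacheck b = b/2 + xbeta b"
proof -
  have b: "b > 0" using Gam_lt1[OF assms] by simp
  note xb = xbeta_prop[OF assms]
  show ?thesis unfolding deltacheck_def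
  proof (rule the_equality)
    show "b/2 < b/2 + xbeta b \<and> b/2 + xbeta b < b \<and> Lf b (b/2 + xbeta b - b/2) = - ln (Gam b)"
      using xb Lf_eq[OF b, of "xbeta b"] by auto
    fix d assume d: "b/2 < d \<and> d < b \<and> Lf b (d - b/2) = - ln (Gam b)"
    then have "L0 b (d - b/2) = - ln (Gam b)" using Lf_eq[OF b, of "d - b/2"] by auto
    then have "d - b/2 = xbeta b"
      using L0_strict_mono[of "xbeta b" "d - b/2" b] L0_strict_mono[of "d - b/2" "xbeta b" b] xb d
      by (cases "xbeta b" "d - b/2" rule: linorder_cases) auto
    then show "d = b/2 + xbeta b" by simp
  qed
qed

lemma delta_c_nonneg: fixes b :: real assumes "b > 0" shows "delta_c b \<ge> 0"
proof -
  define X where "X = (cosh b)^2 - exp b"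
  have c1: "cosh b \<ge> 1" by (rule cosh_real_ge_1)
  have "cosh b - sqrt X \<ge> 1"
  proof (cases "X \<ge> 0")
    case True
    have "X \<le> (cosh b - 1)^2"
    proof -
      have "2 * cosh b = exp b + exp (-b)" by (simp add: cosh_def)
      moreover have "exp (-b) \<le> 1" using assms by simp
      ultimately have "2 * cosh b \<le> exp b + 1" by linarith
      then show ?thesis unfolding X_def by (simp add: power2_eq_square algebra_simps)
    qed
    then have "sqrt X \<le> cosh b - 1"
      using c1 by (metis abs_of_nonneg diff_ge_0_iff_ge real_sqrt_abs real_sqrt_le_mono)
    then show ?thesis by simp
  next
    case False
    then have "sqrt X < 0" by simp
    then show ?thesis using c1 by linarith
  qed
  then show ?thesis unfolding delta_c_def X_def by simp
qed


lemma sdelta_cont: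
  fixes b d q :: real
  assumes d: "0 < d" "d < b" and sI: "sdelta b d q \<in> {-d<..<b-d}"
    and sq: "K1 b 0 (d-b/2) (sdelta b d q) = q"
  shows "isCont (sdelta b d) q"
  unfolding continuous_at_eps_delta
proof (intro allI impI)
  fix \<epsilon> :: real assume e: "\<epsilon> > 0"
  define s where "s = sdelta b d q"
  define c where "c = d - b/2"
  have adm: "admI b 0 c (-d) (b-d)" using admH[OF d] unfolding c_def .
  define r where "r = min (\<epsilon>/2) (min ((s + d)/2) ((b - d - s)/2))"
  have rr: "r \<le> \<epsilon>/2" "r \<le> (s + d)/2" "r \<le> (b - d - s)/2" unfolding r_def
    by (simp_all only: min_le_iff_disj) simp_all
  have "r > 0" using sI e unfolding r_def s_def by auto
  then have r: "r > 0" "r < \<epsilon>" "s - r > -d" "s + r < b - d"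
    using rr sI e unfolding s_def by auto
  have s1: "s - r \<in> {-d<..<b-d}" and s2: "s + r \<in> {-d<..<b-d}" using r sI unfolding s_def by auto
  have sIs: "s \<in> {-d<..<b-d}" using sI unfolding s_def .
  have q1: "K1 b 0 c (s - r) < q" using K1_strict_mono[OF adm s1 sIs] r sq unfolding s_def c_def by auto
  have q2: "q < K1 b 0 c (s + r)" using K1_strict_mono[OF adm sIs s2] r sq unfolding s_def c_def by auto
  define \<delta> where "\<delta> = min (q - K1 b 0 c (s - r)) (K1 b 0 c (s + r) - q)"
  have dp: "\<delta> > 0" unfolding \<delta>_def using q1 q2 by auto
  show "\<exists>\<delta>>0. \<forall>x'. dist x' q < \<delta> \<longrightarrow> dist (sdelta b d x') (sdelta b d q) < \<epsilon>"
  proof (intro exI[of _ \<delta>] conjI allI impI dp)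
    fix y assume "dist y q < \<delta>"
    then have y: "K1 b 0 c (s - r) < y" "y < K1 b 0 c (s + r)" unfolding \<delta>_def dist_real_def by auto
    obtain t where t: "s - r \<le> t" "t \<le> s + r" "K1 b 0 c t = y"
      using K1_root_exists[OF adm s1 s2, of y] y by auto
    have tI: "t \<in> {-d<..<b-d}" using t s1 s2 by auto
    have "sdelta b d y = t" by (rule sdelta_char[OF d tI]) (use t in \<open>simp add: c_def\<close>)
    then show "dist (sdelta b d y) (sdelta b d q) < \<epsilon>"
      using t r unfolding dist_real_def s_def[symmetric] by auto
  qed
qed

context
  fixes b d :: real
  assumes bb: "b > beta_c" and d1: "b/2 < d" and d2: "d < b"
    and A: "K1 b 0 (d-b/2) (b/2 - d - xbeta b) \<le> 0"
begin

lemma bpos: "b > 0" using Gam_lt1[OF bb] by simp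
lemma dd: "0 < d" "d < b" using d1 d2 bpos by auto
lemma xb: "0 < xbeta b" "xbeta b < b/2" "L0 b (xbeta b) = - ln (Gam b)" using xbeta_prop[OF bb] by auto
lemma admd: "admI b 0 (d-b/2) (-d) (b-d)" using admH[OF dd] .
lemma s0I: "b/2 - d - xbeta b \<in> {-d<..<b-d}" using xb dd d1 by auto

lemma sq_prop: assumes "q \<ge> K1 b 0 (d-b/2) (b/2 - d - xbeta b)"
  shows "sdelta b d q \<in> {-d<..<b-d} \<and> K1 b 0 (d-b/2) (sdelta b d q) = q \<and> b/2 - d - xbeta b \<le> sdelta b d q"
  using sdelta_ex[OF dd s0I assms] .

lemma sq_cont: assumes "q \<ge> K1 b 0 (d-b/2) (b/2 - d - xbeta b)"
  shows "isCont (sdelta b d) q"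
  using sdelta_cont[OF dd] sq_prop[OF assms] by blast

lemma sq_deriv: assumes "q > K1 b 0 (d-b/2) (b/2 - d - xbeta b)"
  shows "(sdelta b d has_real_derivative inverse (K2 b 0 (d-b/2) (sdelta b d q))) (at q)"
proof (rule DERIV_inverse_function[where f="K1 b 0 (d-b/2)" and a="K1 b 0 (d-b/2) (b/2 - d - xbeta b)" and b="q+1"])
  have P: "sdelta b d q \<in> {-d<..<b-d}" using sq_prop[of q] assms by auto
  show "(K1 b 0 (d-b/2) has_real_derivative K2 b 0 (d-b/2) (sdelta b d q)) (at (sdelta b d q))"
    by (rule K1_deriv[OF admd P])
  show "K2 b 0 (d-b/2) (sdelta b d q) \<noteq> 0" using K2_pos[OF admd P] by simp
  show "K1 b 0 (d-b/2) (b/2 - d - xbeta b) < q" by (rule assms)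
  show "q < q + 1" by simp
  show "K1 b 0 (d - b/2) (sdelta b d y) = y" if "K1 b 0 (d-b/2) (b/2 - d - xbeta b) < y" "y < q + 1" for y
    using sq_prop[of y] that by auto
  show "isCont (sdelta b d) q" using sq_cont assms by auto
qed

lemma phi_deriv: assumes "q > K1 b 0 (d-b/2) (b/2 - d - xbeta b)"
  shows "((\<lambda>q. Kf b 0 (d-b/2) (sdelta b d q) - q * sdelta b d q) has_real_derivative - sdelta b d q) (at q)"
proof -
  have P: "sdelta b d q \<in> {-d<..<b-d}" "K1 b 0 (d-b/2) (sdelta b d q) = q" using sq_prop[of q] assms by auto
  note D = sq_deriv[OF assms]
  have K: "((\<lambda>q. Kf b 0 (d-b/2) (sdelta b d q)) has_real_derivative
       K1 b 0 (d-b/2) (sdelta b d q) * inverse (K2 b 0 (d-b/2) (sdelta b d q))) (at q)"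
    by (rule DERIV_chain2[OF K_deriv[OF admd P(1)] D])
  have "((\<lambda>q. Kf b 0 (d-b/2) (sdelta b d q) - q * sdelta b d q) has_real_derivative
       K1 b 0 (d-b/2) (sdelta b d q) * inverse (K2 b 0 (d-b/2) (sdelta b d q))
       - (1 * sdelta b d q + inverse (K2 b 0 (d-b/2) (sdelta b d q)) * q)) (at q)"
    by (intro DERIV_diff K DERIV_mult DERIV_ident D)
  then show ?thesis using P(2) by simp
qed

end

context
  fixes b d :: real
  assumes bb: "b > beta_c" and d1: "b/2 < d" and d2: "d < b"
    and A: "K1 b 0 (d-b/2) (b/2 - d - xbeta b) \<le> 0"
begin

lemmas bpos' = bpos[OF bb d1 d2 A]
lemmas dd' = dd[OF bb d1 d2 A]
lemmas xb' = xb[OF bb d1 d2 A]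
lemmas admd' = admd[OF bb d1 d2 A]
lemmas s0I' = s0I[OF bb d1 d2 A]
lemmas sqp = sq_prop[OF bb d1 d2 A]
lemmas phid = phi_deriv[OF bb d1 d2 A]

definition Tfun :: "real \<Rightarrow> real" where
  "Tfun a = a * ln (Gam b) + a * (Kf b 0 (d-b/2) (sdelta b d (1/a^2)) - (1/a^2) * sdelta b d (1/a^2))"

lemma Tf_eq: assumes a: "a > 0" shows "Tf b d a = Tfun a"
proof -
  define q where "q = 1/a^2"
  have q: "q > 0" unfolding q_def using a by simp
  have P: "sdelta b d q \<in> {-d<..<b-d}" using sqp[of q] q A by auto
  have h: "0 \<le> htilde b q" using htilde_char[OF bpos', of q] q by auto
  have "\<not> (0 \<le> d \<and> d \<le> delta0 b q)" unfolding delta0_def using h d1 by auto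
  then have "psi b q d = Hf b d (sdelta b d q) - q * sdelta b d q" unfolding psi_def by auto
  also have "Hf b d (sdelta b d q) = Kf b 0 (d-b/2) (sdelta b d q)" by (rule Hf_eq[OF dd' P])
  finally show ?thesis unfolding Tf_def Tfun_def q_def by simp
qed

lemma T_deriv: assumes a: "a > 0"
  shows "(Tfun has_real_derivative ln (Gam b) + L0 b (sdelta b d (1/a^2) + (d - b/2))) (at a)"
proof -
  define q where "q = 1/a^2"
  define s where "s = sdelta b d q"
  define c where "c = d - b/2"
  have q: "q > 0" unfolding q_def using a by simp
  have qA: "q > K1 b 0 (d-b/2) (b/2 - d - xbeta b)" using q A by simp
  have P: "s \<in> {-d<..<b-d}" "K1 b 0 c s = q" using sqp[of q] qA unfolding s_def c_def by auto
  have inner: "((\<lambda>a. 1/a^2) has_real_derivative -(2/a^3)) (at a)"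
    using a by (auto intro!: derivative_eq_intros simp: power2_eq_square power3_eq_cube field_simps)
  have ph: "((\<lambda>a. Kf b 0 c (sdelta b d (1/a^2)) - (1/a^2) * sdelta b d (1/a^2)) has_real_derivative
       (- s) * (-(2/a^3))) (at a)"
  proof -
    have qA': "1/a^2 > K1 b 0 (d-b/2) (b/2 - d - xbeta b)" using qA unfolding q_def .
    show ?thesis using DERIV_chain2[OF phid[OF qA'] inner] unfolding s_def c_def q_def .
  qed
  have "(Tfun has_real_derivative (1 * ln (Gam b) + 0 * a) + (1 * (Kf b 0 c (sdelta b d (1/a^2)) - (1/a^2) * sdelta b d (1/a^2)) + ((- s) * (-(2/a^3))) * a)) (at a)"
    unfolding Tfun_def c_def[symmetric]
    by (intro DERIV_add DERIV_mult DERIV_ident DERIV_const ph)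
  moreover have "(1 * ln (Gam b) + 0 * a) + (1 * (Kf b 0 c (sdelta b d (1/a^2)) - (1/a^2) * sdelta b d (1/a^2)) + ((- s) * (-(2/a^3))) * a)
      = ln (Gam b) + L0 b (s + c)"
  proof -
    have id: "s * K1 b 0 c s = L0 b (s + c) - Kf b 0 c s"
      using K_ident[OF admd'[folded c_def] P(1)] by simp
    have e1: "sdelta b d (1/a^2) = s" unfolding s_def q_def ..
    have e2: "((- s) * (-(2/a^3))) * a = 2 * (s * q)" unfolding q_def using a
      by (simp add: power2_eq_square power3_eq_cube field_simps)
    have e3: "(1/a^2) * s = s * q" unfolding q_def by simp
    show ?thesis unfolding e1 e2 e3 using id P(2) by simp
  qed
  ultimately show ?thesis unfolding s_def q_def c_def by simp
qed

lemma Tfun_cont: assumes "a > 0" shows "isCont Tfun a"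
  using T_deriv[OF assms] DERIV_isCont by blast

end

lemma L0_abs: "L0 b \<bar>y\<bar> = L0 b y"
  by (cases "y \<ge> 0") (auto simp: L0_even)

context
  fixes b d :: real
  assumes bb: "b > beta_c" and d1: "b/2 < d" and d2: "d < b"
    and A: "K1 b 0 (d-b/2) (b/2 - d - xbeta b) \<le> 0"
begin

lemmas bpos_2 = bpos[OF bb d1 d2 A]
lemmas dd_2 = dd[OF bb d1 d2 A]
lemmas xb_2 = xb[OF bb d1 d2 A]
lemmas admd_2 = admd[OF bb d1 d2 A]
lemmas s0I_2 = s0I[OF bb d1 d2 A]
lemmas sqp_2 = sq_prop[OF bb d1 d2 A]
lemmas Tf_eq_2 = Tf_eq[OF bb d1 d2 A]
lemmas T_deriv_2 = T_deriv[OF bb d1 d2 A]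
lemmas Tfun_cont_2 = Tfun_cont[OF bb d1 d2 A]

definition sstar where "sstar = xbeta b - (d - b/2)"
definition qstar where "qstar = K1 b 0 (d - b/2) sstar"
definition astar where "astar = 1 / sqrt qstar"

lemma sstarI: "sstar \<in> {-d<..<b-d}" unfolding sstar_def using xb_2 dd_2 by auto

lemma qstar_pos: "qstar > 0"
proof -
  define c where "c = d - b/2"
  define \<mu> where "\<mu> = min c (xbeta b)"
  have c: "0 < c" "c < b/2" unfolding c_def using d1 d2 by auto
  have mu: "0 < \<mu>" "\<mu> < b/2" unfolding \<mu>_def using c xb_2 by auto
  have Pmu: "P0 b \<mu> > 0" by (rule P0_pos[OF mu])
  have "integral {0..1} (\<lambda>x. 0 + P0 b \<mu> * x) \<le> qstar"
    unfolding qstar_def K1_def c_def[symmetric]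
  proof (rule integral_le)
    show "(\<lambda>x. 0 + P0 b \<mu> * x) integrable_on {0..1}" by (intro integrable_continuous_interval continuous_intros)
    have "continuous_on {0..1} (\<lambda>x. P0 b (sstar*(x+0)+c))"
      by (rule prof_cont1[OF admd_2[folded c_def] P0_contOn sstarI])
    then show "(\<lambda>x. (x + 0) * P0 b (sstar * (x + 0) + c)) integrable_on {0..1}"
      by (intro integrable_continuous_interval continuous_intros)
    fix x :: real assume x: "x \<in> {0..1}"
    have eq: "sstar * (x+0) + c = (1-x) * c + x * xbeta b" unfolding sstar_def c_def by (simp add: field_simps)
    have ge: "(1-x) * c + x * xbeta b \<ge> \<mu>"
    proof -
      have "(1-x) * c \<ge> (1-x) * \<mu>" "x * xbeta b \<ge> x * \<mu>" using x unfolding \<mu>_def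
        by (auto intro!: mult_left_mono)
      then show ?thesis by (simp add: algebra_simps)
    qed
    have ab: "\<bar>sstar * (x+0) + c\<bar> < b/2" using admd_2[folded c_def] sstarI x unfolding admI_def by blast
    have "P0 b \<mu> \<le> P0 b (sstar * (x+0) + c)"
      by (rule P0_mono) (use mu ab ge eq in auto)
    then show "0 + P0 b \<mu> * x \<le> (x + 0) * P0 b (sstar * (x + 0) + c)"
      using x by (simp add: mult.commute mult_left_mono)
  qed
  moreover have "integral {0..1} (\<lambda>x. 0 + P0 b \<mu> * x) = P0 b \<mu> / 2" by (simp only: int_lin)
  ultimately show ?thesis using Pmu by linarith
qed

lemma astar_pos: "astar > 0" unfolding astar_def using qstar_pos by simp

lemma sq_qstar: "sdelta b d qstar = sstar"
  by (rule sdelta_char[OF dd_2 sstarI]) (simp add: qstar_def)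

lemma q_of_a: assumes "a > 0" shows "1/a^2 > qstar \<longleftrightarrow> a < astar" "1/a^2 < qstar \<longleftrightarrow> a > astar"
proof -
  have qs: "qstar > 0" by (rule qstar_pos)
  have ap: "astar > 0" by (rule astar_pos)
  have as: "astar^2 = 1/qstar" unfolding astar_def using qs by (simp add: power_divide)
  have sq: "x < y \<longleftrightarrow> x^2 < y^2" if "0 < x" "0 < y" for x y :: real
  proof
    assume "x < y" then show "x^2 < y^2" using that by (intro power_strict_mono) auto
  next
    assume "x^2 < y^2" then show "x < y" using that by (intro power_less_imp_less_base[of x 2 y]) auto
  qed
  have "1/a^2 > qstar \<longleftrightarrow> a^2 < 1/qstar"
    using assms qs by (simp add: divide_less_eq less_divide_eq mult.commute)
  also have "\<dots> \<longleftrightarrow> a < astar" unfolding as[symmetric] using sq[OF assms ap] by simp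
  finally show "1/a^2 > qstar \<longleftrightarrow> a < astar" .
  have "1/a^2 < qstar \<longleftrightarrow> 1/qstar < a^2"
    using assms qs by (simp add: divide_less_eq less_divide_eq mult.commute)
  also have "\<dots> \<longleftrightarrow> astar < a" unfolding as[symmetric] using sq[OF ap assms] by simp
  finally show "1/a^2 < qstar \<longleftrightarrow> a > astar" .
qed

lemma Tderiv_pos: assumes "0 < a" "a < astar"
  shows "ln (Gam b) + L0 b (sdelta b d (1/a^2) + (d - b/2)) > 0"
proof -
  define q where "q = 1/a^2"
  have q: "q > qstar" unfolding q_def using q_of_a[OF assms(1)] assms by simp
  have qA: "q \<ge> K1 b 0 (d-b/2) (b/2 - d - xbeta b)" using q qstar_pos A by linarith
  have P: "sdelta b d q \<in> {-d<..<b-d}" "K1 b 0 (d-b/2) (sdelta b d q) = q" using sqp_2[OF qA] by auto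
  have gt: "sdelta b d q > sstar"
  proof (rule ccontr)
    assume "\<not> sdelta b d q > sstar"
    then have "K1 b 0 (d-b/2) (sdelta b d q) \<le> qstar"
      unfolding qstar_def by (intro K1_mono[OF admd_2 P(1) sstarI]) auto
    then show False using P q by simp
  qed
  have "L0 b (xbeta b) < L0 b (sdelta b d q + (d - b/2))"
    by (rule L0_strict_mono) (use xb_2 gt P(1) in \<open>auto simp: sstar_def\<close>)
  then show ?thesis using xb_2 unfolding q_def by simp
qed

lemma Tderiv_neg: assumes "astar < a"
  shows "ln (Gam b) + L0 b (sdelta b d (1/a^2) + (d - b/2)) < 0"
proof -
  have a0: "a > 0" using assms astar_pos by simp
  define q where "q = 1/a^2"
  have q: "q < qstar" "q > 0" unfolding q_def using q_of_a[OF a0] assms a0 by auto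
  have qA: "q \<ge> K1 b 0 (d-b/2) (b/2 - d - xbeta b)" using q A by linarith
  have P: "sdelta b d q \<in> {-d<..<b-d}" "K1 b 0 (d-b/2) (sdelta b d q) = q" "b/2 - d - xbeta b \<le> sdelta b d q"
    using sqp_2[OF qA] by auto
  have lt: "sdelta b d q < sstar"
  proof (rule ccontr)
    assume "\<not> sdelta b d q < sstar"
    then have "qstar \<le> K1 b 0 (d-b/2) (sdelta b d q)"
      unfolding qstar_def by (intro K1_mono[OF admd_2 sstarI P(1)]) auto
    then show False using P q by simp
  qed
  have ne: "sdelta b d q \<noteq> b/2 - d - xbeta b" using P(2) A q by auto
  have r: "\<bar>sdelta b d q + (d - b/2)\<bar> < xbeta b"
    using lt P(3) ne unfolding sstar_def abs_less_iff by auto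
  have "L0 b (sdelta b d q + (d - b/2)) = L0 b \<bar>sdelta b d q + (d - b/2)\<bar>"
    by (rule L0_abs[symmetric])
  also have "\<dots> < L0 b (xbeta b)" by (rule L0_strict_mono) (use r xb_2 in auto)
  finally show ?thesis using xb_2 unfolding q_def by simp
qed

lemma T_incr: assumes "0 < a" "a < astar" shows "Tfun b d a < Tfun b d astar"
proof (rule DERIV_pos_imp_increasing_open[OF assms(2)])
  fix x assume x: "a < x" "x < astar"
  then show "\<exists>y. ((Tfun b d) has_real_derivative y) (at x) \<and> 0 < y"
    using T_deriv_2[of x] Tderiv_pos[of x] assms by auto
next
  show "continuous_on {a..astar} (Tfun b d)"
    using assms by (intro continuous_at_imp_continuous_on ballI Tfun_cont_2) auto
qed

lemma T_decr: assumes "astar < a" shows "Tfun b d a < Tfun b d astar"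
proof (rule DERIV_neg_imp_decreasing_open[OF assms])
  fix x assume x: "astar < x" "x < a"
  then show "\<exists>y. ((Tfun b d) has_real_derivative y) (at x) \<and> y < 0"
    using T_deriv_2[of x] Tderiv_neg[of x] astar_pos by auto
next
  show "continuous_on {astar..a} (Tfun b d)"
    using assms astar_pos by (intro continuous_at_imp_continuous_on ballI Tfun_cont_2) auto
qed

lemma abar_eq: "abar b d = astar"
  unfolding abar_def
proof (rule the_equality)
  have T: "Tf b d a' < Tf b d astar" if "0 < a'" "a' \<noteq> astar" for a'
    using T_incr[of a'] T_decr[of a'] that Tf_eq_2[of a'] Tf_eq_2[of astar] astar_pos
    by (cases a' astar rule: linorder_cases) auto
  show "0 < astar \<and> (\<forall>a'. 0 < a' \<longrightarrow> Tf b d a' \<le> Tf b d astar)"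
  proof (intro conjI allI impI astar_pos)
    fix a' :: real assume "0 < a'"
    then show "Tf b d a' \<le> Tf b d astar" using T[of a'] by (cases "a' = astar") auto
  qed
  fix a assume a: "0 < a \<and> (\<forall>a'. 0 < a' \<longrightarrow> Tf b d a' \<le> Tf b d a)"
  show "a = astar"
  proof (rule ccontr)
    assume "a \<noteq> astar"
    then have "Tf b d a < Tf b d astar" using T a by auto
    moreover have "Tf b d astar \<le> Tf b d a" using a astar_pos by auto
    ultimately show False by simp
  qed
qed

lemma s_final: "sdelta b d (abar b d powr (-2)) = xbeta b - (d - b/2)"
proof -
  have "astar powr (-2) = qstar"
  proof -
    have "astar powr (-2) = inverse (astar powr 2)" by (simp add: powr_minus)
    also have "astar powr 2 = astar^2" using astar_pos by (simp add: powr_realpow)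
    also have "astar^2 = 1/qstar" unfolding astar_def using qstar_pos by (simp add: power_divide)
    finally show ?thesis by simp
  qed
  then show ?thesis using abar_eq sq_qstar unfolding sstar_def by simp
qed

end

lemma A_concave:
  fixes b d :: real
  assumes bb: "b > beta_c" and d1: "b/2 < d" and d3: "d < deltacheck b"
  shows "K1 b 0 (d-b/2) (b/2 - d - xbeta b) \<le> 0"
proof -
  have b: "b > 0" using Gam_lt1[OF bb] by simp
  note xb = xbeta_prop[OF bb]
  have dc: "deltacheck b = b/2 + xbeta b" by (rule deltacheck_eq[OF bb])
  have d: "0 < d" "d < b" using d1 d3 dc xb b by auto
  define c where "c = d - b/2"
  define s0 where "s0 = b/2 - d - xbeta b"
  have c: "0 < c" "c < xbeta b" unfolding c_def using d1 d3 dc by auto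
  have s0I: "s0 \<in> {-d<..<b-d}" unfolding s0_def using xb d by auto
  have s0n: "s0 < 0" unfolding s0_def using c xb unfolding c_def by auto
  have adm: "admI b 0 c (-d) (b-d)" using admH[OF d] unfolding c_def .
  have idH: "s0 * K1 b 0 c s0 = L0 b (s0 + c) - Kf b 0 c s0"
    using K_ident[OF adm s0I] by simp
  have sc: "s0 + c = - xbeta b" unfolding s0_def c_def by simp
  have upH: "Kf b 0 c s0 \<le> (L0 b c + L0 b (s0 + c))/2"
    using KH_upper[OF d s0I] unfolding c_def by simp
  have Lc: "L0 b c \<le> L0 b (xbeta b)" by (rule L0_mono_abs) (use c xb in auto)
  have "L0 b (s0 + c) = L0 b (xbeta b)" unfolding sc L0_even ..
  then have "s0 * K1 b 0 c s0 \<ge> 0" using idH upH Lc by (simp add: field_simps)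
  then have "K1 b 0 c s0 \<le> 0" using s0n by (simp add: mult_le_0_iff zero_le_mult_iff)
  then show ?thesis unfolding c_def s0_def .
qed

definition Fd :: "real \<Rightarrow> real \<Rightarrow> real" where
  "Fd b d' = K1 b 0 (d'-b/2) (b/2 - d' - xbeta b)"

lemma Fd_cont:
  fixes b :: real assumes bb: "b > beta_c" and d: "d \<in> {0<..<b}"
  shows "isCont (Fd b) d"
proof -
  have b: "b > 0" using Gam_lt1[OF bb] by simp
  note xb = xbeta_prop[OF bb]
  define x0 where "x0 = xbeta b"
  define f where "f = (\<lambda>d' x. (x+0) * P0 b ((b/2 - d' - x0)*(x+0) + (d'-b/2)))"
  define f' where "f' = (\<lambda>d' x. (x+0) * (Q0 b ((b/2 - d' - x0)*(x+0) + (d'-b/2)) * (1 - x)))"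
  have arg: "\<bar>(b/2 - d' - x0)*(x+0) + (d'-b/2)\<bar> < b/2" if "d' \<in> {0<..<b}" "x \<in> {0..1}" for d' x
  proof -
    have "\<bar>(1-x)*(d'-b/2) + x*(-x0)\<bar> < b/2"
    proof (rule cvx_abs)
      show "\<bar>d' - b/2\<bar> < b/2" "\<bar>-x0\<bar> < b/2" using that xb unfolding x0_def abs_less_iff by auto
    qed (use that in auto)
    moreover have "(1-x)*(d'-b/2) + x*(-x0) = (b/2 - d' - x0)*(x+0) + (d'-b/2)" by (simp add: field_simps)
    ultimately show ?thesis by simp
  qed
  have der: "((\<lambda>s. integral {0..1} (f s)) has_real_derivative integral {0..1} (f' d)) (at d)"
  proof (rule leib[OF d])
    fix s x :: real assume sx: "s \<in> {0<..<b}" "x \<in> {0..1}"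
    have i: "((\<lambda>s. (b/2 - s - x0)*(x+0) + (s-b/2)) has_real_derivative (1 - x)) (at s)"
      by (auto intro!: derivative_eq_intros)
    have "((\<lambda>s. P0 b ((b/2 - s - x0)*(x+0) + (s-b/2))) has_real_derivative Q0 b ((b/2 - s - x0)*(x+0) + (s-b/2)) * (1 - x)) (at s)"
      using DERIV_chain2[OF P0_deriv[OF arg[OF sx]] i] .
    then show "((\<lambda>s. f s x) has_real_derivative f' s x) (at s)"
      unfolding f_def f'_def by (rule DERIV_cmult)
  next
    fix s :: real assume s: "s \<in> {0<..<b}"
    have "continuous_on {0..1} (\<lambda>x. P0 b ((b/2 - s - x0)*(x+0) + (s-b/2)))"
    proof (rule continuous_on_compose2[OF P0_contOn])
      show "continuous_on {0..1} (\<lambda>x. (b/2 - s - x0)*(x+0) + (s-b/2))" by (intro continuous_intros)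
      show "(\<lambda>x. (b/2 - s - x0)*(x+0) + (s-b/2)) ` {0..1} \<subseteq> {-b/2<..<b/2}"
      proof
        fix y assume "y \<in> (\<lambda>x. (b/2 - s - x0)*(x+0) + (s-b/2)) ` {0..1}"
        then obtain x where x: "x \<in> {0..1}" "y = (b/2 - s - x0)*(x+0) + (s-b/2)" by blast
        show "y \<in> {-b/2<..<b/2}" using abs_in[OF arg[OF s x(1)]] x(2) by simp
      qed
    qed
    then show "continuous_on {0..1} (f s)" unfolding f_def by (intro continuous_intros)
  next
    have "continuous_on ({0<..<b} \<times> {0..1}) (\<lambda>z. Q0 b ((\<lambda>(s,x). (b/2 - s - x0)*(x+0) + (s-b/2)) z))"
    proof (rule continuous_on_compose2[OF Q0_contOn])
      show "continuous_on ({0<..<b} \<times> {0..1}) (\<lambda>(s,x). (b/2 - s - x0)*(x+0) + (s-b/2))"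
        unfolding case_prod_beta by (intro continuous_intros)
      show "(\<lambda>(s,x). (b/2 - s - x0)*(x+0) + (s-b/2)) ` ({0<..<b} \<times> {0..1}) \<subseteq> {-b/2<..<b/2}"
      proof
        fix y assume "y \<in> (\<lambda>(s,x). (b/2 - s - x0)*(x+0) + (s-b/2)) ` ({0<..<b} \<times> {0..1})"
        then obtain z where z: "z \<in> {0<..<b} \<times> {0..1}" "y = (\<lambda>(s,x). (b/2 - s - x0)*(x+0) + (s-b/2)) z" by blast
        obtain s x where zz: "z = (s, x)" by (cases z)
        have sx: "s \<in> {0<..<b}" "x \<in> {0..1}" "y = (b/2 - s - x0)*(x+0) + (s-b/2)" using z zz by auto
        show "y \<in> {-b/2<..<b/2}" using abs_in[OF arg[OF sx(1,2)]] sx(3) by simp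
      qed
    qed
    then show "continuous_on ({0<..<b} \<times> {0..1}) (\<lambda>(s,x). f' s x)"
      unfolding f'_def case_prod_beta by (intro continuous_intros) (simp add: case_prod_beta)
  qed
  have eq: "Fd b d' = integral {0..1} (f d')" for d'
    unfolding Fd_def K1_def f_def x0_def by (simp add: algebra_simps)
  show ?thesis unfolding eq[abs_def] using DERIV_isCont[OF der] by simp
qed

lemma A_deltabar:
  fixes b d :: real
  assumes bb: "b > beta_c" and d: "0 < d" "d < b" and db: "d \<le> deltabar b"
  shows "K1 b 0 (d-b/2) (b/2 - d - xbeta b) \<le> 0"
proof (rule ccontr)
  assume neg: "\<not> K1 b 0 (d-b/2) (b/2 - d - xbeta b) \<le> 0"
  have b: "b > 0" using Gam_lt1[OF bb] by simp
  note xb = xbeta_prop[OF bb]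
  define S where "S = {d'. 0 < d' \<and> d' < b \<and> deriv (Hf b d') (b/2 - d' - xbeta b) > 0}"
  have Sd: "d' \<in> S \<longleftrightarrow> 0 < d' \<and> d' < b \<and> Fd b d' > 0" for d'
  proof -
    have "deriv (Hf b d') (b/2 - d' - xbeta b) = Fd b d'" if "0 < d'" "d' < b"
      unfolding Fd_def by (rule Hf_deriv) (use that xb in auto)
    then show ?thesis unfolding S_def by auto
  qed
  have dS: "d \<in> S" using Sd d neg unfolding Fd_def by auto
  have bdd: "bdd_below S" unfolding S_def by (rule bdd_belowI[of _ 0]) auto
  have "deltabar b = min b (Inf S)" unfolding deltabar_def S_def[symmetric] Let_def using dS by auto
  then have dInf: "d \<le> Inf S" using db d by auto
  have "Fd b d > 0" using dS Sd by auto
  moreover have "isCont (Fd b) d" by (rule Fd_cont[OF bb]) (use d in auto)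
  ultimately obtain \<delta> where dl: "\<delta> > 0" "\<forall>y. dist y d < \<delta> \<longrightarrow> dist (Fd b y) (Fd b d) < Fd b d"
    unfolding continuous_at_eps_delta by blast
  define d' where "d' = max (d/2) (d - \<delta>/2)"
  have d': "0 < d'" "d' < d" unfolding d'_def using d dl by auto
  have "dist d' d < \<delta>" unfolding d'_def dist_real_def using dl d by auto
  then have "\<bar>Fd b d' - Fd b d\<bar> < Fd b d" using dl by (auto simp: dist_real_def)
  then have "Fd b d' > 0" by linarith
  then have "d' \<in> S" using Sd d' d by auto
  then have "Inf S \<le> d'" by (rule cInf_lower[OF _ bdd])
  then show False using dInf d' by linarith
qed


lemma int_convex:
  fixes W g :: "real \<Rightarrow> real"
  assumes cont: "continuous_on {0..1} g"
    and mono: "\<And>x y. 0 \<le> x \<Longrightarrow> x \<le> y \<Longrightarrow> y \<le> 1 \<Longrightarrow> g x \<le> g y"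
    and W: "\<And>t. t \<in> {0..1} \<Longrightarrow> W t = integral {0..t} g"
  shows "convex_on {0..1} W"
proof (rule convex_on_linorderI)
  show "convex {0..1::real}" by simp
  fix t x y :: real assume t: "0 < t" "t < 1" and x: "x \<in> {0..1}" and y: "y \<in> {0..1}" and xy: "x < y"
  define z where "z = (1 - t) * x + t * y"
  have zx: "z - x = t * (y - x)" and yz: "y - z = (1 - t) * (y - x)" unfolding z_def by (simp_all add: algebra_simps)
  have n1: "0 \<le> t * (y - x)" using t xy by auto
  have n2: "0 \<le> (1 - t) * (y - x)" using t xy by auto
  have xz1: "x \<le> z" using zx n1 by linarith
  have xz2: "z \<le> y" using yz n2 by linarith
  note xz = xz1 xz2
  have z: "z \<in> {0..1}" using xz x y by auto
  have int: "g integrable_on {a..b'}" if "0 \<le> a" "b' \<le> 1" for a b'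
    by (rule integrable_continuous_interval, rule continuous_on_subset[OF cont]) (use that in auto)
  have Wz: "W z - W x = integral {x..z} g"
    using Henstock_Kurzweil_Integration.integral_combine[of 0 x z g] int[of 0 z] W[OF x] W[OF z] xz x z by auto
  have Wy: "W y - W z = integral {z..y} g"
    using Henstock_Kurzweil_Integration.integral_combine[of 0 z y g] int[of 0 y] W[OF y] W[OF z] xz z y by auto
  have I1: "integral {x..z} g \<le> (z - x) * g z"
  proof -
    have "integral {x..z} g \<le> integral {x..z} (\<lambda>_. g z)"
      by (rule integral_le) (use int[of x z] x z mono in auto)
    then show ?thesis using xz by simp
  qed
  have I2: "(y - z) * g z \<le> integral {z..y} g"
  proof -
    have "integral {z..y} (\<lambda>_. g z) \<le> integral {z..y} g"
      by (rule integral_le) (use int[of z y] z y mono in auto)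
    then show ?thesis using xz by simp
  qed
  have P1: "(1-t) * (W z - W x) \<le> (1-t) * (t * ((y - x) * g z))"
    using mult_left_mono[OF I1[unfolded zx, folded Wz], of "1-t"] t by (simp add: mult.assoc)
  have P2: "t * ((1-t) * ((y - x) * g z)) \<le> t * (W y - W z)"
    using mult_left_mono[OF I2[unfolded yz, folded Wy], of t] t by (simp add: mult.assoc)
  have P3: "(1-t) * (t * ((y - x) * g z)) = t * ((1-t) * ((y - x) * g z))" by simp
  have "(1-t) * (W z - W x) \<le> t * (W y - W z)" using P1 P2 P3 by linarith
  then have "W z \<le> (1-t) * W x + t * W y" by (simp add: algebra_simps)
  then show "W ((1 - t) *\<^sub>R x + t *\<^sub>R y) \<le> (1 - t) * W x + t * W y" unfolding z_def by simp
qed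

lemma W_shape:
  fixes b d s :: real
  assumes b: "b > 0" and d: "0 < d" "d < b" and sI: "s \<in> {-d<..<b-d}"
    and sdef: "sdelta b d (abar b d powr (-2)) = s"
  shows "(s \<ge> 0 \<longrightarrow> concave_on {0..1} (Wf b d)) \<and> (s \<le> 0 \<longrightarrow> convex_on {0..1} (Wf b d))"
proof -
  define g where "g = (\<lambda>x. P0 b (s*(1-x) + d - b/2))"
  have arg: "\<bar>s*(1-x) + d - b/2\<bar> < b/2" if "x \<in> {0..1}" for x
  proof -
    have "\<bar>(1-x)*(s + d - b/2) + x*(d - b/2)\<bar> < b/2"
    proof (rule cvx_abs)
      show "\<bar>s + d - b/2\<bar> < b/2" "\<bar>d - b/2\<bar> < b/2" using sI d unfolding abs_less_iff by auto
    qed (use that in auto)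
    moreover have "(1-x)*(s + d - b/2) + x*(d - b/2) = s*(1-x) + d - b/2" by (simp add: field_simps)
    ultimately show ?thesis by simp
  qed
  have cont: "continuous_on {0..1} g"
    unfolding g_def
  proof (rule continuous_on_compose2[OF P0_contOn])
    show "continuous_on {0..1} (\<lambda>x. s*(1-x) + d - b/2)" by (intro continuous_intros)
    show "(\<lambda>x. s*(1-x) + d - b/2) ` {0..1} \<subseteq> {-b/2<..<b/2}"
    proof
      fix y assume "y \<in> (\<lambda>x. s*(1-x) + d - b/2) ` {0..1}"
      then obtain x where x: "x \<in> {0..1}" "y = s*(1-x) + d - b/2" by blast
      show "y \<in> {-b/2<..<b/2}" using abs_in[OF arg[OF x(1)]] x(2) by simp
    qed
  qed
  have Weq: "Wf b d t = integral {0..t} g" if "t \<in> {0..1}" for t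
    unfolding Wf_def sdef
  proof (rule integral_cong)
    fix x assume "x \<in> {0..t}"
    then have x: "x \<in> {0..1}" using that by auto
    show "deriv (Lf b) (s * (1 - x) + d - b / 2) = g x"
      unfolding g_def by (rule deriv_Lf[OF b arg[OF x]])
  qed
  show ?thesis
  proof (intro conjI impI)
    assume s0: "s \<ge> 0"
    have "convex_on {0..1} (\<lambda>t. - Wf b d t)"
    proof (rule int_convex[where g="\<lambda>x. - g x"])
      show "continuous_on {0..1} (\<lambda>x. - g x)" using cont by (intro continuous_intros)
      fix x y :: real assume xy: "0 \<le> x" "x \<le> y" "y \<le> 1"
      have "s*(1-y) \<le> s*(1-x)" using s0 xy by (intro mult_left_mono) auto
      then have "P0 b (s*(1-y) + d - b/2) \<le> P0 b (s*(1-x) + d - b/2)"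
        by (intro P0_mono arg) (use xy in auto)
      then show "- g x \<le> - g y" unfolding g_def by simp
    next
      fix t :: real assume "t \<in> {0..1}"
      then show "- Wf b d t = integral {0..t} (\<lambda>x. - g x)" using Weq by simp
    qed
    then show "concave_on {0..1} (Wf b d)" unfolding concave_on_def .
  next
    assume s0: "s \<le> 0"
    show "convex_on {0..1} (Wf b d)"
    proof (rule int_convex[OF cont])
      fix x y :: real assume xy: "0 \<le> x" "x \<le> y" "y \<le> 1"
      have "s*(1-x) \<le> s*(1-y)" using s0 xy by (intro mult_left_mono_neg) auto
      then have "P0 b (s*(1-x) + d - b/2) \<le> P0 b (s*(1-y) + d - b/2)"
        by (intro P0_mono arg) (use xy in auto)
      then show "g x \<le> g y" unfolding g_def by simp
    next
      fix t :: real assume "t \<in> {0..1}"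
      then show "Wf b d t = integral {0..t} g" using Weq by simp
    qed
  qed
qed

theorem proposition2p6:
  fixes b d :: real
  assumes "b > beta_c" and "0 \<le> d" and "d < b" and "d \<le> deltabar b"
  shows "(delta_c b < d \<and> d < deltacheck b \<longrightarrow> concave_on {0..1} (Wf b d))
       \<and> (deltacheck b < d \<and> d < b \<longrightarrow> convex_on {0..1} (Wf b d))"
proof -
  note bb = assms(1)
  have b: "b > 0" using Gam_lt1[OF bb] by simp
  note xb = xbeta_prop[OF bb]
  have dc: "deltacheck b = b/2 + xbeta b" by (rule deltacheck_eq[OF bb])
  have big: "concave_on {0..1} (Wf b d) \<and> \<not> deltacheck b < d"
    if d1: "b/2 < d" and d3: "d < deltacheck b"
  proof -
    have A: "K1 b 0 (d-b/2) (b/2 - d - xbeta b) \<le> 0" by (rule A_concave[OF bb d1 d3])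
    have sf: "sdelta b d (abar b d powr (-2)) = xbeta b - (d - b/2)"
      by (rule s_final[OF bb d1 assms(3) A])
    have d0: "0 < d" using d1 b by simp
    have sI: "xbeta b - (d - b/2) \<in> {-d<..<b-d}" using xb d0 assms(3) by auto
    have "xbeta b - (d - b/2) \<ge> 0" using d3 dc by simp
    then show ?thesis using W_shape[OF b d0 assms(3) sI sf] d3 by auto
  qed
  show ?thesis
  proof (intro conjI impI)
    assume h: "delta_c b < d \<and> d < deltacheck b"
    have d0: "0 < d" using h delta_c_nonneg[OF b] by linarith
    show "concave_on {0..1} (Wf b d)"
    proof (cases "d \<le> b/2")
      case True
      define q where "q = abar b d powr (-2)"
      have q: "q \<ge> 0" unfolding q_def by simp
      have zI: "(0::real) \<in> {-d<..<b-d}" using d0 assms(3) by auto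
      have "K1 b 0 (d - b/2) 0 = integral {0..1} (\<lambda>x. 0 + P0 b (d - b/2) * x)"
        unfolding K1_def by (simp add: mult.commute)
      also have "\<dots> = P0 b (d - b/2) / 2" by (simp only: int_lin)
      also have "P0 b (d - b/2) \<le> 0"
      proof (cases "d = b/2")
        case False then show ?thesis using P0_neg[of "d - b/2" b] True d0 by auto
      next
        case True
        then have h0: "d - b/2 = 0" by simp
        show ?thesis unfolding h0 by simp
      qed
      finally have "K1 b 0 (d - b/2) 0 \<le> q" using q by simp
      then have S: "sdelta b d q \<in> {-d<..<b-d} \<and> 0 \<le> sdelta b d q"
        using sdelta_ex[OF d0 assms(3) zI] by auto
      show ?thesis using W_shape[OF b d0 assms(3), of "sdelta b d q"] S unfolding q_def by auto
    next
      case False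
      then show ?thesis using big h by auto
    qed
  next
    assume h: "deltacheck b < d \<and> d < b"
    have d1: "b/2 < d" using h dc xb by auto
    have d0: "0 < d" using d1 b by simp
    have A: "K1 b 0 (d-b/2) (b/2 - d - xbeta b) \<le> 0" by (rule A_deltabar[OF bb d0 assms(3,4)])
    have sf: "sdelta b d (abar b d powr (-2)) = xbeta b - (d - b/2)"
      by (rule s_final[OF bb d1 assms(3) A])
    have sI: "xbeta b - (d - b/2) \<in> {-d<..<b-d}" using xb d0 assms(3) by auto
    have "xbeta b - (d - b/2) \<le> 0" using h dc by simp
    then show "convex_on {0..1} (Wf b d)" using W_shape[OF b d0 assms(3) sI sf] by auto
  qed
qed


end
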